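(* The terminal value problem $$\partial_tv(t,q)+v(t,q)C^S(q)-v(t,q)\,C\sum_{j\in\{a,b\}}\Big(\frac{v(t,q)}{\sum_{i\in\mathcal G}v(t,q\ominus_i\phi(j))\mathbf 1_{\{\phi(j)q^i>-\bar q\}}}\Big)^{\frac{k\varpi}{\sigma\eta}}=0,\quad (t,q)\in[0,T)\times\mathcal Q^N,\qquad v(T,q)=-1,\ q\in\mathcal Q^N,$$ (a system of $(2\bar q+1)^N$ ordinary differential equations) admits a unique bounded solution $v:[0,T]\times\mathcal Q^N\to\mathbb R$, and this solution is negative.
   Context: Fix integers $N\ge1$, $\bar q\in\mathbb N$, reals $T,A,k,\sigma,c,\varpi,\eta>0$, $\gamma_1,\dots,\gamma_N>0$. $\mathcal Q:=\{-\bar q,\dots,\bar q\}$; $\phi(a)=1$, $\phi(b)=-1$; $q\ominus_ix$ is $q$ with $i$-th coordinate $q^i-x$ (so $q\ominus_i(-1)$ adds one to $q^i$); $\mathcal G:=\{i:\gamma_i=\max_m\gamma_m\}$. A term in the sum over $j$ whose denominator is an empty sum (all indicators zero) is interpreted as $0$. $\mu_{i,j}:=-\eta\kappa\prod_{m\notin\{i,j\}}\gamma_m$ ($i\ne j$), $\mu_{i,i}:=\kappa(\prod_{j\ne i}\gamma_j+\eta\sum_{j\ne i}\prod_{m\notin\{i,j\}}\gamma_m)$, $\kappa^{-1}:=\prod_i\gamma_i+\eta\sum_j\prod_{m\ne j}\gamma_m$. $C^S(q):=\sum_{i=1}^N\frac\eta2\sigma^2\gamma_i\big(q^i-\sum_{j}\mu_{i,j}\gamma_jq^j\big)^2+\frac{\eta^2\sigma^2}2\big(\sum_i\sum_j\mu_{i,j}\gamma_jq^j\big)^2$.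 $C:=A\exp\big(-\frac k\sigma\big(c(1-\varpi)-\frac\varpi\eta\log\big(\frac{k\varpi}{k\varpi+\eta\sigma}\mathrm{Card}(\mathcal G)(1+\eta\sigma\sum_i\frac1{k\varpi+\sigma\gamma_i})\big)+\varpi\sum_i\gamma_i^{-1}\log(1+\frac{\sigma\gamma_i}{k\varpi})\big)\big)\cdot\frac{\sigma\eta}{k\varpi+\sigma\eta}\big(1+\eta\sigma\sum_i\frac1{k\varpi+\sigma\gamma_i}\big)$. *)

theory Defs
  imports "HOL-Analysis.Analysis"
begin

datatype side = Side_a | Side_b

fun phi :: "side \<Rightarrow> int" where
  "phi Side_a = 1"
| "phi Side_b = -1"

definition Qset :: "nat \<Rightarrow> nat \<Rightarrow> (nat \<Rightarrow> int) set" where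
  "Qset N qbar = {q. (\<forall>i<N. - int qbar \<le> q i \<and> q i \<le> int qbar) \<and> (\<forall>i. N \<le> i \<longrightarrow> q i = 0)}"

definition ominus :: "(nat \<Rightarrow> int) \<Rightarrow> nat \<Rightarrow> int \<Rightarrow> (nat \<Rightarrow> int)" where
  "ominus q i x = q(i := q i - x)"

definition Gset :: "nat \<Rightarrow> (nat \<Rightarrow> real) \<Rightarrow> nat set" where
  "Gset N gamma = {i. i < N \<and> gamma i = Max (gamma ` {..<N})}"

definition kappa :: "nat \<Rightarrow> (nat \<Rightarrow> real) \<Rightarrow> real \<Rightarrow> real" where
  "kappa N gamma eta = 1 / ((\<Prod>i<N. gamma i) + eta * (\<Sum>j<N. \<Prod>m\<in>{..<N} - {j}. gamma m))"

definition mu :: "nat \<Rightarrow> (nat \<Rightarrow> real) \<Rightarrow> real \<Rightarrow> nat \<Rightarrow> nat \<Rightarrow> real" where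
  "mu N gamma eta i j =
     (if i \<noteq> j then - eta * kappa N gamma eta * (\<Prod>m\<in>{..<N} - {i, j}. gamma m)
      else kappa N gamma eta * ((\<Prod>j\<in>{..<N} - {i}. gamma j)
             + eta * (\<Sum>j\<in>{..<N} - {i}. \<Prod>m\<in>{..<N} - {i, j}. gamma m)))"

definition CS :: "nat \<Rightarrow> (nat \<Rightarrow> real) \<Rightarrow> real \<Rightarrow> real \<Rightarrow> (nat \<Rightarrow> int) \<Rightarrow> real" where
  "CS N gamma eta sig q =
     (\<Sum>i<N. eta / 2 * sig^2 * gamma i *
        (real_of_int (q i) - (\<Sum>j<N. mu N gamma eta i j * gamma j * real_of_int (q j)))^2)
     + eta^2 * sig^2 / 2 *
        (\<Sum>i<N. \<Sum>j<N. mu N gamma eta i j * gamma j * real_of_int (q j))^2"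

definition Cconst :: "nat \<Rightarrow> (nat \<Rightarrow> real) \<Rightarrow> real \<Rightarrow> real \<Rightarrow> real \<Rightarrow> real \<Rightarrow> real \<Rightarrow> real \<Rightarrow> real" where
  "Cconst N gamma A k sig c varpi eta =
     (let S = 1 + eta * sig * (\<Sum>i<N. 1 / (k * varpi + sig * gamma i)) in
      A * exp (- (k / sig) *
          (c * (1 - varpi)
           - varpi / eta * ln (k * varpi / (k * varpi + eta * sig) * real (card (Gset N gamma)) * S)
           + varpi * (\<Sum>i<N. (1 / gamma i) * ln (1 + sig * gamma i / (k * varpi)))))
        * (sig * eta / (k * varpi + sig * eta)) * S)"

definition active :: "nat \<Rightarrow> nat \<Rightarrow> (nat \<Rightarrow> real) \<Rightarrow> (nat \<Rightarrow> int) \<Rightarrow> side \<Rightarrow> nat set" where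
  "active N qbar gamma q j = {i \<in> Gset N gamma. phi j * q i > - int qbar}"

definition denom :: "nat \<Rightarrow> nat \<Rightarrow> (nat \<Rightarrow> real) \<Rightarrow> (real \<Rightarrow> (nat \<Rightarrow> int) \<Rightarrow> real)
                      \<Rightarrow> real \<Rightarrow> (nat \<Rightarrow> int) \<Rightarrow> side \<Rightarrow> real" where
  "denom N qbar gamma v t q j =
     (\<Sum>i\<in>Gset N gamma. v t (ominus q i (phi j)) * (if phi j * q i > - int qbar then 1 else 0))"

definition jterm :: "nat \<Rightarrow> nat \<Rightarrow> (nat \<Rightarrow> real) \<Rightarrow> real \<Rightarrow> (real \<Rightarrow> (nat \<Rightarrow> int) \<Rightarrow> real)
                      \<Rightarrow> real \<Rightarrow> (nat \<Rightarrow> int) \<Rightarrow> side \<Rightarrow> real" where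
  "jterm N qbar gamma p v t q j =
     (if active N qbar gamma q j = {} then 0
      else (v t q / denom N qbar gamma v t q j) powr p)"

text \<open>The power x^p (p = k varpi/(sig eta) real) is only meaningful for x >= 0 and the quotient
  only for a nonzero denominator; a solution is required to keep the equation well defined.\<close>
definition well_defined :: "nat \<Rightarrow> nat \<Rightarrow> (nat \<Rightarrow> real) \<Rightarrow> (real \<Rightarrow> (nat \<Rightarrow> int) \<Rightarrow> real)
                      \<Rightarrow> real \<Rightarrow> (nat \<Rightarrow> int) \<Rightarrow> bool" where
  "well_defined N qbar gamma v t q \<longleftrightarrow>
     (\<forall>j. active N qbar gamma q j \<noteq> {} \<longrightarrow>
          denom N qbar gamma v t q j \<noteq> 0 \<and> v t q / denom N qbar gamma v t q j \<ge> 0)"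

definition is_solution ::
  "nat \<Rightarrow> nat \<Rightarrow> real \<Rightarrow> real \<Rightarrow> real \<Rightarrow> real \<Rightarrow> real \<Rightarrow> real \<Rightarrow> real \<Rightarrow> (nat \<Rightarrow> real)
    \<Rightarrow> (real \<Rightarrow> (nat \<Rightarrow> int) \<Rightarrow> real) \<Rightarrow> bool" where
  "is_solution N qbar T A k sig c varpi eta gamma v \<longleftrightarrow>
     (\<forall>q\<in>Qset N qbar.
        continuous_on {0..T} (\<lambda>t. v t q)
      \<and> v T q = -1
      \<and> (\<forall>t\<in>{0..<T}. well_defined N qbar gamma v t q
          \<and> ((\<lambda>s. v s q) has_real_derivative
               (- v t q * CS N gamma eta sig q
                + v t q * Cconst N gamma A k sig c varpi eta *
                  (\<Sum>j\<in>{Side_a, Side_b}. jterm N qbar gamma (k * varpi / (sig * eta)) v t q j)))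
             (at t within {0..T})))"

definition bounded_on :: "nat \<Rightarrow> nat \<Rightarrow> real \<Rightarrow> (real \<Rightarrow> (nat \<Rightarrow> int) \<Rightarrow> real) \<Rightarrow> bool" where
  "bounded_on N qbar T v \<longleftrightarrow> (\<exists>M. \<forall>t\<in>{0..T}. \<forall>q\<in>Qset N qbar. \<bar>v t q\<bar> \<le> M)"

end

theory Submission
  imports Defs
begin

lemma right_deriv_nonneg:
  fixes f :: "real \<Rightarrow> real"
  assumes d: "(f has_real_derivative D) (at t within {a..b})"
    and "a \<le> t" "t < b" "f t = 0" and pos: "\<forall>s\<in>{t<..b}. f s > 0"
  shows "D \<ge> 0"
proof -
  have "((\<lambda>y. (f y - f t) / (y - t)) \<longlongrightarrow> D) (at t within {a..b})"
    using d by (simp add: has_field_derivative_iff)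
  hence "((\<lambda>y. (f y - f t) / (y - t)) \<longlongrightarrow> D) (at t within {t..b})"
    by (rule tendsto_within_subset) (use assms in auto)
  hence lim: "((\<lambda>y. (f y - f t) / (y - t)) \<longlongrightarrow> D) (at_right t)"
    using at_within_Icc_at_right[OF \<open>t < b\<close>] by simp
  have ev: "eventually (\<lambda>y. 0 \<le> (f y - f t) / (y - t)) (at_right t)"
    unfolding eventually_at_right[OF \<open>t < b\<close>]
    using pos \<open>f t = 0\<close> \<open>t < b\<close> by (intro exI[of _ b]) (auto intro: less_imp_le)
  show ?thesis
    by (rule tendsto_lowerbound[OF lim ev]) simp
qed

lemma crossing:
  fixes h :: "real \<Rightarrow> 'q \<Rightarrow> real" and Dh :: "real \<Rightarrow> 'q \<Rightarrow> real"
  assumes fin: "finite Q"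
    and cont: "\<forall>q\<in>Q. continuous_on {0..T} (\<lambda>t. h t q)"
    and endp: "\<forall>q\<in>Q. h T q > 0"
    and der: "\<forall>q\<in>Q. \<forall>t\<in>{0..<T}. ((\<lambda>t. h t q) has_real_derivative Dh t q) (at t within {0..T})"
    and key: "\<forall>q\<in>Q. \<forall>t\<in>{0..<T}. h t q = 0 \<and> (\<forall>q'\<in>Q. h t q' \<ge> 0) \<longrightarrow> Dh t q < 0"
  shows "\<forall>q\<in>Q. \<forall>t\<in>{0..T}. h t q > 0"
proof (rule ccontr)
  assume neg: "\<not> (\<forall>q\<in>Q. \<forall>t\<in>{0..T}. h t q > 0)"
  define S where "S = {t\<in>{0..T}. \<exists>q\<in>Q. h t q \<le> 0}"
  have Sne: "S \<noteq> {}" using neg by (auto simp: S_def not_less)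
  have Seq: "S = (\<Union>q\<in>Q. {0..T} \<inter> (\<lambda>t. h t q) -` {..0})" by (auto simp: S_def)
  have "closed S" unfolding Seq
    using fin cont by (intro closed_UN ballI continuous_closed_preimage) auto
  have bdd: "bdd_above S" by (auto simp: S_def bdd_above_def)
  define ts where "ts = Sup S"
  have tsS: "ts \<in> S" unfolding ts_def using closed_contains_Sup[OF Sne bdd \<open>closed S\<close>] .
  then obtain q where q: "q \<in> Q" "h ts q \<le> 0" and ts: "0 \<le> ts" "ts \<le> T" by (auto simp: S_def)
  have "ts \<noteq> T" using q endp by auto
  with ts have tsT: "ts < T" by simp
  have after: "\<forall>q'\<in>Q. \<forall>s\<in>{ts<..T}. h s q' > 0"
  proof (intro ballI)
    fix q' s assume "q' \<in> Q" "s \<in> {ts<..T}"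
    hence "s \<notin> S" using cSup_upper[OF _ bdd, of s] by (auto simp: ts_def)
    thus "h s q' > 0" using \<open>q' \<in> Q\<close> \<open>s \<in> {ts<..T}\<close> ts by (auto simp: S_def not_le)
  qed
  have nonneg: "\<forall>q'\<in>Q. h ts q' \<ge> 0"
  proof
    fix q' assume q': "q' \<in> Q"
    have "((\<lambda>t. h t q') \<longlongrightarrow> h ts q') (at ts within {0..T})"
      using cont q' ts by (auto simp: continuous_on_def)
    hence "((\<lambda>t. h t q') \<longlongrightarrow> h ts q') (at ts within {ts..T})"
      by (rule tendsto_within_subset) (use ts in auto)
    hence lim: "((\<lambda>t. h t q') \<longlongrightarrow> h ts q') (at_right ts)"
      using at_within_Icc_at_right[OF tsT] by simp
    have ev: "eventually (\<lambda>t. 0 \<le> h t q') (at_right ts)"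
      unfolding eventually_at_right[OF tsT]
      using after q' by (intro exI[of _ T]) (auto intro: less_imp_le simp: tsT)
    show "h ts q' \<ge> 0" by (rule tendsto_lowerbound[OF lim ev]) simp
  qed
  hence h0: "h ts q = 0" using q by force
  have "Dh ts q < 0" using key q h0 nonneg ts tsT by auto
  moreover have "Dh ts q \<ge> 0"
    by (rule right_deriv_nonneg[where f="\<lambda>t. h t q" and t=ts and a=0 and b=T]) (use der q ts tsT after h0 in auto)
  ultimately show False by simp
qed


lemma eps_lemma:
  fixes a b c eb :: real
  assumes "eb > 0" "c \<ge> 0" and h: "\<And>\<epsilon>. 0 < \<epsilon> \<Longrightarrow> \<epsilon> < eb \<Longrightarrow> a > b - \<epsilon> * c"
  shows "a \<ge> b"
proof (rule ccontr)
  assume "\<not> a \<ge> b"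
  hence ab: "b - a > 0" by simp
  define \<epsilon> where "\<epsilon> = min (eb/2) ((b - a) / (2 * (c + 1)))"
  have "\<epsilon> > 0" "\<epsilon> < eb" using ab \<open>eb>0\<close> \<open>c\<ge>0\<close> by (auto simp: \<epsilon>_def)
  hence "a > b - \<epsilon> * c" by (rule h)
  moreover have "\<epsilon> * c \<le> (b - a) / (2 * (c + 1)) * c"
    using \<open>c \<ge> 0\<close> by (intro mult_right_mono) (auto simp: \<epsilon>_def)
  moreover have "(b - a) / (2 * (c + 1)) * c < b - a"
  proof -
    have "(b - a) / (2 * (c + 1)) * c = (b - a) * (c / (2*(c+1)))" by simp
    also have "\<dots> < (b - a) * 1"
      using ab \<open>c\<ge>0\<close> by (intro mult_strict_left_mono) (auto simp: field_simps)
    finally show ?thesis by simp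
  qed
  ultimately show False by linarith
qed

lemma apriori:
  fixes X D :: "real \<Rightarrow> 'q \<Rightarrow> real" and CS :: "'q \<Rightarrow> real" and Ja Jb :: "real \<Rightarrow> 'q \<Rightarrow> real"
  assumes fin: "finite Q" and T: "T \<ge> 0" and Cc: "Cc > 0" and B: "B \<ge> 0"
    and cont: "\<forall>q\<in>Q. continuous_on {0..T} (\<lambda>t. X t q)"
    and endv: "\<forall>q\<in>Q. X T q = -1"
    and der: "\<forall>q\<in>Q. \<forall>t\<in>{0..<T}. ((\<lambda>t. X t q) has_real_derivative D t q) (at t within {0..T})"
    and form: "\<forall>q\<in>Q. \<forall>t\<in>{0..<T}. \<bar>X t q\<bar> \<le> Mb \<longrightarrow> D t q = X t q * (- CS q + Cc * (Ja t q + Jb t q))"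
    and CSb: "\<forall>q\<in>Q. 0 \<le> CS q \<and> CS q \<le> B"
    and Jnn: "\<forall>q\<in>Q. \<forall>t\<in>{0..<T}. Ja t q \<ge> 0 \<and> Jb t q \<ge> 0"
    and Jle: "\<forall>q\<in>Q. \<forall>t\<in>{0..<T}. X t q < 0 \<and> (\<forall>q'\<in>Q. X t q' \<le> X t q) \<longrightarrow> Ja t q \<le> 1 \<and> Jb t q \<le> 1"
    and Mb: "Mb > exp (B * T)"
  shows "\<forall>q\<in>Q. \<forall>t\<in>{0..T}. - exp (B * (T - t)) \<le> X t q \<and> X t q \<le> - exp (- (2 * Cc * (T - t)))"
proof (intro ballI conjI)
  fix q t assume q: "q \<in> Q" and t: "t \<in> {0..T}"
  have low: "- exp (2*Cc*(T-t)) * X t q > 1 - \<epsilon> * (1 + T - t)"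
    if \<epsilon>: "0 < \<epsilon>" "\<epsilon> < 1 / (1 + T)" for \<epsilon>
  proof -
    define h where "h = (\<lambda>t q. - exp (2*Cc*(T-t)) * X t q - 1 + \<epsilon> * (1 + T - t))"
    define Dh where "Dh = (\<lambda>t q. 2*Cc*exp (2*Cc*(T-t)) * X t q - exp (2*Cc*(T-t)) * D t q - \<epsilon>)"
    have e1: "\<epsilon> * (1 + T) < 1" using \<epsilon> T by (simp add: field_simps)
    have "\<forall>q\<in>Q. \<forall>t\<in>{0..T}. h t q > 0"
    proof (rule crossing[OF fin, where Dh=Dh])
      show "\<forall>q\<in>Q. continuous_on {0..T} (\<lambda>t. h t q)"
        using cont unfolding h_def by (auto intro!: continuous_intros)
      show "\<forall>q\<in>Q. h T q > 0" using endv \<epsilon> by (auto simp: h_def)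
      show "\<forall>q\<in>Q. \<forall>t\<in>{0..<T}. ((\<lambda>t. h t q) has_real_derivative Dh t q) (at t within {0..T})"
      proof (intro ballI)
        fix q t assume "q \<in> Q" "t \<in> {0..<T}"
        hence d: "((\<lambda>t. X t q) has_real_derivative D t q) (at t within {0..T})" using der by auto
        show "((\<lambda>t. h t q) has_real_derivative Dh t q) (at t within {0..T})"
          unfolding h_def Dh_def
          by (rule derivative_eq_intros d refl)+ (simp add: algebra_simps)
      qed
      show "\<forall>q\<in>Q. \<forall>t\<in>{0..<T}. h t q = 0 \<and> (\<forall>q'\<in>Q. h t q' \<ge> 0) \<longrightarrow> Dh t q < 0"
      proof (intro ballI impI)
        fix q t assume q: "q \<in> Q" and t: "t \<in> {0..<T}" and hq: "h t q = 0 \<and> (\<forall>q'\<in>Q. h t q' \<ge> 0)"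
        define E where "E = exp (2*Cc*(T-t))"
        have E1: "E \<ge> 1" using Cc t by (auto simp: E_def)
        have eq: "- E * X t q = 1 - \<epsilon> * (1 + T - t)" using hq by (auto simp: h_def E_def)
        have pos: "1 - \<epsilon> * (1 + T - t) > 0"
        proof -
          have "\<epsilon> * (1 + T - t) \<le> \<epsilon> * (1 + T)" using \<epsilon> t by (intro mult_left_mono) auto
          thus ?thesis using e1 by linarith
        qed
        have le1: "1 - \<epsilon> * (1 + T - t) \<le> 1" using \<epsilon> t by auto
        have "E * X t q < 0" using eq pos by linarith
        hence Xneg: "X t q < 0" using E1 by (simp add: mult_less_0_iff)
        have "\<bar>X t q\<bar> * E \<le> 1" using eq le1 Xneg by (simp add: abs_if algebra_simps)
        moreover have "\<bar>X t q\<bar> * 1 \<le> \<bar>X t q\<bar> * E" using E1 by (intro mult_left_mono) auto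
        ultimately have "\<bar>X t q\<bar> \<le> 1" by linarith
        moreover have "1 < Mb"
        proof -
          have "0 \<le> B * T" using B T by simp
          hence "1 \<le> exp (B * T)" by simp
          thus ?thesis using Mb by linarith
        qed
        ultimately have Dq: "D t q = X t q * (- CS q + Cc * (Ja t q + Jb t q))" using form q t by auto
        have mx: "\<forall>q'\<in>Q. X t q' \<le> X t q"
        proof
          fix q' assume "q' \<in> Q"
          hence "h t q' \<ge> h t q" using hq by auto
          hence "- E * X t q' \<ge> - E * X t q" by (auto simp: h_def E_def)
          thus "X t q' \<le> X t q" using E1 by auto
        qed
        have "Ja t q \<le> 1 \<and> Jb t q \<le> 1" using Jle q t Xneg mx by blast
        hence "Cc * (Ja t q + Jb t q) \<le> Cc * 2" using Cc by (intro mult_left_mono) auto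
        hence g: "2*Cc - (- CS q + Cc * (Ja t q + Jb t q)) \<ge> 0" using CSb q by auto
        have "Dh t q = E * X t q * (2*Cc - (- CS q + Cc * (Ja t q + Jb t q))) - \<epsilon>"
          by (simp add: Dh_def E_def Dq algebra_simps)
        also have "E * X t q * (2*Cc - (- CS q + Cc * (Ja t q + Jb t q))) \<le> 0"
          using E1 Xneg g by (intro mult_nonpos_nonneg mult_nonneg_nonpos) auto
        hence "E * X t q * (2*Cc - (- CS q + Cc * (Ja t q + Jb t q))) - \<epsilon> < 0" using \<epsilon> by linarith
        finally show "Dh t q < 0" .
      qed
    qed
    hence "h t q > 0" using q t by auto
    thus ?thesis unfolding h_def by linarith
  qed
  have "- exp (2*Cc*(T-t)) * X t q \<ge> 1"
    by (rule eps_lemma[where eb="1/(1+T)" and c="1+T-t"]) (use low T t in auto)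
  hence "X t q * exp (2*Cc*(T-t)) \<le> -1" by (simp add: algebra_simps)
  hence "X t q \<le> -1 / exp (2*Cc*(T-t))" by (subst pos_le_divide_eq) auto
  moreover have "-1 / exp (2*Cc*(T-t)) = - exp (- (2 * Cc * (T - t)))" by (simp add: exp_minus divide_inverse)
  ultimately show "X t q \<le> - exp (- (2 * Cc * (T - t)))" by simp
next
  fix q t assume q: "q \<in> Q" and t: "t \<in> {0..T}"
  define e0 where "e0 = (Mb / exp (B*T) - 1) / (1 + T)"
  have "Mb / exp (B*T) > 1" using Mb by simp
  hence e0: "e0 > 0" using T by (auto simp: e0_def)
  have up: "exp (- (B*(T-t))) * X t q > -1 - \<epsilon> * (1 + T - t)"
    if \<epsilon>: "0 < \<epsilon>" "\<epsilon> < e0" for \<epsilon>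
  proof -
    define h where "h = (\<lambda>t q. 1 + \<epsilon> * (1 + T - t) + exp (- (B*(T-t))) * X t q)"
    define Dh where "Dh = (\<lambda>t q. - \<epsilon> + B * exp (- (B*(T-t))) * X t q + exp (- (B*(T-t))) * D t q)"
    have e1: "(1 + \<epsilon> * (1 + T)) * exp (B*T) < Mb"
    proof -
      have "0 < 1 + T" using T by simp
      hence "\<epsilon> * (1+T) < e0 * (1+T)" using \<epsilon> by (intro mult_strict_right_mono) auto
      also have "\<dots> = Mb / exp (B*T) - 1" using T by (simp add: e0_def)
      finally have "\<epsilon> * (1+T) * exp (B*T) < (Mb / exp (B*T) - 1) * exp (B*T)"
        by (intro mult_strict_right_mono) auto
      also have "\<dots> = Mb - exp (B*T)" by (simp add: algebra_simps)
      finally show ?thesis by (simp add: algebra_simps)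
    qed
    have "\<forall>q\<in>Q. \<forall>t\<in>{0..T}. h t q > 0"
    proof (rule crossing[OF fin, where Dh=Dh])
      show "\<forall>q\<in>Q. continuous_on {0..T} (\<lambda>t. h t q)"
        using cont unfolding h_def by (auto intro!: continuous_intros)
      show "\<forall>q\<in>Q. h T q > 0" using endv \<epsilon> by (auto simp: h_def)
      show "\<forall>q\<in>Q. \<forall>t\<in>{0..<T}. ((\<lambda>t. h t q) has_real_derivative Dh t q) (at t within {0..T})"
      proof (intro ballI)
        fix q t assume "q \<in> Q" "t \<in> {0..<T}"
        hence d: "((\<lambda>t. X t q) has_real_derivative D t q) (at t within {0..T})" using der by auto
        show "((\<lambda>t. h t q) has_real_derivative Dh t q) (at t within {0..T})"
          unfolding h_def Dh_def
          by (rule derivative_eq_intros d refl)+ (simp add: algebra_simps)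
      qed
      show "\<forall>q\<in>Q. \<forall>t\<in>{0..<T}. h t q = 0 \<and> (\<forall>q'\<in>Q. h t q' \<ge> 0) \<longrightarrow> Dh t q < 0"
      proof (intro ballI impI)
        fix q t assume q: "q \<in> Q" and t: "t \<in> {0..<T}" and hq: "h t q = 0 \<and> (\<forall>q'\<in>Q. h t q' \<ge> 0)"
        define F where "F = exp (- (B*(T-t)))"
        have F0: "F > 0" by (simp add: F_def)
        have eq: "F * X t q = - (1 + \<epsilon> * (1 + T - t))" using hq by (auto simp: h_def F_def)
        have pos: "1 + \<epsilon> * (1 + T - t) > 0" using \<epsilon> t by (auto intro: add_pos_nonneg)
        have "F * X t q < 0" using eq pos by linarith
        hence Xneg: "X t q < 0" using F0 by (simp add: mult_less_0_iff)
        have "\<bar>X t q\<bar> = (1 + \<epsilon> * (1 + T - t)) / F" using eq Xneg F0 by (simp add: field_simps)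
        also have "\<dots> = (1 + \<epsilon> * (1 + T - t)) * exp (B*(T-t))" by (simp add: F_def exp_minus divide_inverse)
        also have "\<dots> \<le> (1 + \<epsilon> * (1 + T)) * exp (B*T)"
        proof (rule mult_mono)
          show "1 + \<epsilon> * (1 + T - t) \<le> 1 + \<epsilon> * (1 + T)"
            using \<epsilon> t by (simp add: mult_left_mono)
          show "exp (B*(T-t)) \<le> exp (B*T)" using B t by (simp add: mult_left_mono)
          show "0 \<le> 1 + \<epsilon> * (1 + T)" using \<epsilon> T by simp
        qed simp
        finally have "\<bar>X t q\<bar> \<le> Mb" using e1 by linarith
        hence Dq: "D t q = X t q * (- CS q + Cc * (Ja t q + Jb t q))" using form q t by auto
        have "Ja t q \<ge> 0" "Jb t q \<ge> 0" using Jnn q t by auto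
        hence "Cc * (Ja t q + Jb t q) \<ge> 0" using Cc by simp
        hence g: "B + (- CS q + Cc * (Ja t q + Jb t q)) \<ge> 0" using CSb q by auto
        have "Dh t q = F * X t q * (B + (- CS q + Cc * (Ja t q + Jb t q))) - \<epsilon>"
          by (simp add: Dh_def F_def Dq algebra_simps)
        also have "F * X t q * (B + (- CS q + Cc * (Ja t q + Jb t q))) \<le> 0"
          using F0 Xneg g by (intro mult_nonpos_nonneg mult_nonneg_nonpos) auto
        hence "F * X t q * (B + (- CS q + Cc * (Ja t q + Jb t q))) - \<epsilon> < 0" using \<epsilon> by linarith
        finally show "Dh t q < 0" .
      qed
    qed
    hence "h t q > 0" using q t by auto
    thus ?thesis unfolding h_def by linarith
  qed
  have "exp (- (B*(T-t))) * X t q \<ge> -1"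
    by (rule eps_lemma[where eb=e0 and c="1+T-t"]) (use up T t e0 in auto)
  hence "-1 / exp (- (B*(T-t))) \<le> X t q" by (subst pos_divide_le_eq) (auto simp: mult.commute)
  moreover have "-1 / exp (- (B*(T-t))) = - exp (B * (T - t))" by (simp add: exp_minus divide_inverse)
  ultimately show "- exp (B * (T - t)) \<le> X t q" by simp
qed


lemma int_tail_deriv:
  fixes f :: "real \<Rightarrow> real"
  assumes cf: "continuous_on {a..b} f" and t: "t \<in> {a..b}"
  shows "((\<lambda>t. integral {t..b} f) has_real_derivative - f t) (at t within {a..b})"
proof -
  have d: "((\<lambda>t. integral {a..b} f - integral {a..t} f) has_real_derivative 0 - f t) (at t within {a..b})"
    by (intro derivative_intros integral_has_real_derivative[OF cf t])
  have int: "f integrable_on {a..b}" by (rule integrable_continuous_interval[OF cf])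
  show ?thesis
  proof (rule has_field_derivative_transform_within[where d=1, OF _ _ t])
    show "((\<lambda>t. integral {a..b} f - integral {a..t} f) has_real_derivative - f t) (at t within {a..b})"
      using d by simp
    fix x assume x: "x \<in> {a..b}"
    show "integral {a..b} f - integral {a..x} f = integral {x..b} f"
      using Henstock_Kurzweil_Integration.integral_combine[where a=a and c=x and b=b and f=f] x int by auto
  qed simp
qed

lemma int_tail_cont:
  fixes f :: "real \<Rightarrow> real"
  assumes cf: "continuous_on {a..b} f"
  shows "continuous_on {a..b} (\<lambda>t. integral {t..b} f)"
  by (rule DERIV_continuous_on[OF int_tail_deriv[OF cf]])

lemma int_pow:
  fixes t T :: real assumes "t \<le> T"
  shows "integral {t..T} (\<lambda>s. (T - s) ^ n) = (T - t) ^ Suc n / Suc n"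
proof -
  define G where "G = (\<lambda>s. - ((T - s) ^ Suc n) / Suc n)"
  have "((\<lambda>s. (T - s) ^ n) has_integral (G T - G t)) {t..T}"
  proof (rule fundamental_theorem_of_calculus[OF assms])
    fix x assume "x \<in> {t..T}"
    show "(G has_vector_derivative (T - x) ^ n) (at x within {t..T})"
      unfolding has_real_derivative_iff_has_vector_derivative[symmetric] G_def
      by (rule derivative_eq_intros refl)+ (auto simp: divide_simps)
  qed
  thus ?thesis by (auto dest!: integral_unique simp: G_def)
qed

locale ode =
  fixes Q :: "'q set" and F :: "'q \<Rightarrow> ('q \<Rightarrow> real) \<Rightarrow> real" and L K T :: real
  assumes fin: "finite Q" and Lip: "\<And>q x y. q \<in> Q \<Longrightarrow> \<bar>F q x - F q y\<bar> \<le> L * (\<Sum>q'\<in>Q. \<bar>x q' - y q'\<bar>)"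
    and L: "L \<ge> 0" and Kb: "\<And>q x. q \<in> Q \<Longrightarrow> \<bar>F q x\<bar> \<le> K" and T: "T \<ge> 0" and K: "K \<ge> 0"
begin

lemma contF:
  assumes q: "q \<in> Q" and cont: "\<forall>q'\<in>Q. continuous_on S (\<lambda>s. X s q')"
  shows "continuous_on S (\<lambda>s. F q (X s))"
  unfolding continuous_on_def
proof (intro ballI)
  fix s0 assume s0: "s0 \<in> S"
  have "((\<lambda>s. L * (\<Sum>q'\<in>Q. \<bar>X s q' - X s0 q'\<bar>)) \<longlongrightarrow> L * (\<Sum>q'\<in>Q. \<bar>X s0 q' - X s0 q'\<bar>)) (at s0 within S)"
    using cont s0 by (intro tendsto_intros) (auto simp: continuous_on_def)
  hence g: "((\<lambda>s. L * (\<Sum>q'\<in>Q. \<bar>X s q' - X s0 q'\<bar>)) \<longlongrightarrow> 0) (at s0 within S)" by simp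
  have "((\<lambda>s. F q (X s) - F q (X s0)) \<longlongrightarrow> 0) (at s0 within S)"
    by (rule Lim_null_comparison[OF _ g]) (use Lip[OF q] in auto)
  thus "((\<lambda>s. F q (X s)) \<longlongrightarrow> F q (X s0)) (at s0 within S)"
    by (simp add: Lim_null[of _ "F q (X s0)"])
qed

lemma step:
  assumes cX: "\<forall>q\<in>Q. continuous_on {0..T} (\<lambda>s. X s q)" and cY: "\<forall>q\<in>Q. continuous_on {0..T} (\<lambda>s. Y s q)"
    and A: "A \<ge> 0"
    and b: "\<forall>s\<in>{0..T}. (\<Sum>q\<in>Q. \<bar>X s q - Y s q\<bar>) \<le> A * (card Q * L * (T - s)) ^ n / fact n"
    and t: "t \<in> {0..T}"
  shows "(\<Sum>q\<in>Q. \<bar>integral {t..T} (\<lambda>s. F q (X s)) - integral {t..T} (\<lambda>s. F q (Y s))\<bar>)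
          \<le> A * (card Q * L * (T - t)) ^ Suc n / fact (Suc n)"
proof -
  define Lq where "Lq = card Q * L"
  have Lq: "Lq \<ge> 0" using L by (simp add: Lq_def)
  have sub: "{t..T} \<subseteq> {0..T}" using t by auto
  have each: "\<bar>integral {t..T} (\<lambda>s. F q (X s)) - integral {t..T} (\<lambda>s. F q (Y s))\<bar>
      \<le> L * A * Lq ^ n / fact n * ((T - t) ^ Suc n / Suc n)" if q: "q \<in> Q" for q
  proof -
    have cFX: "continuous_on {t..T} (\<lambda>s. F q (X s))"
      by (rule contF[OF q]) (use cX continuous_on_subset[OF _ sub] in blast)
    have cFY: "continuous_on {t..T} (\<lambda>s. F q (Y s))"
      by (rule contF[OF q]) (use cY continuous_on_subset[OF _ sub] in blast)
    have "integral {t..T} (\<lambda>s. F q (X s)) - integral {t..T} (\<lambda>s. F q (Y s))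
        = integral {t..T} (\<lambda>s. F q (X s) - F q (Y s))"
      by (rule integral_diff[symmetric]) (auto intro: integrable_continuous_interval cFX cFY)
    also have "\<bar>\<dots>\<bar> \<le> integral {t..T} (\<lambda>s. L * A * Lq ^ n / fact n * (T - s) ^ n)"
    proof -
      have "norm (integral {t..T} (\<lambda>s. F q (X s) - F q (Y s))) \<le> integral {t..T} (\<lambda>s. L * A * Lq ^ n / fact n * (T - s) ^ n)"
      proof (rule integral_norm_bound_integral)
        show "(\<lambda>s. F q (X s) - F q (Y s)) integrable_on {t..T}"
          by (intro integrable_continuous_interval continuous_intros cFX cFY)
        show "(\<lambda>s. L * A * Lq ^ n / fact n * (T - s) ^ n) integrable_on {t..T}"
          by (intro integrable_continuous_interval continuous_intros)
        fix s assume s: "s \<in> {t..T}"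
        have "norm (F q (X s) - F q (Y s)) \<le> L * (\<Sum>q'\<in>Q. \<bar>X s q' - Y s q'\<bar>)"
          using Lip[OF q] by simp
        also have "\<dots> \<le> L * (A * (Lq * (T - s)) ^ n / fact n)"
          using b s sub L by (intro mult_left_mono) (auto simp: Lq_def)
        also have "\<dots> = L * A * Lq ^ n / fact n * (T - s) ^ n" by (simp add: power_mult_distrib)
        finally show "norm (F q (X s) - F q (Y s)) \<le> L * A * Lq ^ n / fact n * (T - s) ^ n" .
      qed
      thus ?thesis by simp
    qed
    also have "\<dots> = L * A * Lq ^ n / fact n * integral {t..T} (\<lambda>s. (T - s) ^ n)"
      by simp
    also have "\<dots> = L * A * Lq ^ n / fact n * ((T - t) ^ Suc n / Suc n)"
      using t by (simp add: int_pow)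
    finally show ?thesis .
  qed
  have "(\<Sum>q\<in>Q. \<bar>integral {t..T} (\<lambda>s. F q (X s)) - integral {t..T} (\<lambda>s. F q (Y s))\<bar>)
      \<le> (\<Sum>q\<in>Q. L * A * Lq ^ n / fact n * ((T - t) ^ Suc n / Suc n))"
    by (rule sum_mono) (rule each)
  also have "\<dots> = (card Q * L) * A * (Lq ^ n * (T - t) ^ Suc n) / (fact n * Suc n)"
    by (simp add: field_simps)
  also have "\<dots> = Lq * A * (Lq ^ n * (T - t) ^ Suc n) / (fact n * Suc n)"
    by (simp add: Lq_def)
  also have "\<dots> = A * (Lq * (T - t)) ^ Suc n / fact (Suc n)"
    unfolding power_mult_distrib fact_Suc power_Suc by (simp add: field_simps)
  finally show ?thesis by (simp add: Lq_def)
qed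


lemma int_bound:
  assumes q: "q \<in> Q" and cX: "\<forall>q\<in>Q. continuous_on {0..T} (\<lambda>s. X s q)" and t: "t \<in> {0..T}"
  shows "\<bar>integral {t..T} (\<lambda>s. F q (X s))\<bar> \<le> K * (T - t)"
proof -
  have sub: "{t..T} \<subseteq> {0..T}" using t by auto
  have cFX: "continuous_on {t..T} (\<lambda>s. F q (X s))"
    by (rule contF[OF q]) (use cX continuous_on_subset[OF _ sub] in blast)
  have "norm (integral {t..T} (\<lambda>s. F q (X s))) \<le> integral {t..T} (\<lambda>s. K)"
    by (rule integral_norm_bound_integral) (auto intro: integrable_continuous_interval cFX Kb[OF q])
  thus ?thesis using t by (simp add: mult.commute)
qed

lemma int_deriv:
  assumes cX: "\<forall>q\<in>Q. continuous_on {0..T} (\<lambda>s. X s q)"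
    and eq: "\<forall>q\<in>Q. \<forall>t\<in>{0..T}. X t q = -1 - integral {t..T} (\<lambda>s. F q (X s))"
    and q: "q \<in> Q" and t: "t \<in> {0..T}"
  shows "((\<lambda>t. X t q) has_real_derivative F q (X t)) (at t within {0..T})"
proof (rule has_field_derivative_transform_within[where d=1, OF _ _ t])
  have cF: "continuous_on {0..T} (\<lambda>s. F q (X s))" by (rule contF[OF q cX])
  show "((\<lambda>t. -1 - integral {t..T} (\<lambda>s. F q (X s))) has_real_derivative F q (X t)) (at t within {0..T})"
    using int_tail_deriv[OF cF t] by (auto intro!: derivative_eq_intros)
  fix x assume "x \<in> {0..T}"
  thus "-1 - integral {x..T} (\<lambda>s. F q (X s)) = X x q" using eq q by auto
qed simp

lemma uniq:
  assumes cX: "\<forall>q\<in>Q. continuous_on {0..T} (\<lambda>s. X s q)"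
    and eqX: "\<forall>q\<in>Q. \<forall>t\<in>{0..T}. X t q = -1 - integral {t..T} (\<lambda>s. F q (X s))"
    and cY: "\<forall>q\<in>Q. continuous_on {0..T} (\<lambda>s. Y s q)"
    and eqY: "\<forall>q\<in>Q. \<forall>t\<in>{0..T}. Y t q = -1 - integral {t..T} (\<lambda>s. F q (Y s))"
  shows "\<forall>q\<in>Q. \<forall>t\<in>{0..T}. X t q = Y t q"
proof -
  define A1 where "A1 = card Q * (2 * K * T)"
  have A1: "A1 \<ge> 0" using K T by (simp add: A1_def)
  have diff: "X t q - Y t q = - (integral {t..T} (\<lambda>s. F q (X s)) - integral {t..T} (\<lambda>s. F q (Y s)))"
    if "q \<in> Q" "t \<in> {0..T}" for q t using eqX eqY that by auto
  have bnd: "\<forall>t\<in>{0..T}. (\<Sum>q\<in>Q. \<bar>X t q - Y t q\<bar>) \<le> A1 * (card Q * L * (T - t)) ^ n / fact n" for n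
  proof (induction n)
    case 0
    show ?case
    proof
      fix t assume t: "t \<in> {0..T}"
      have "(\<Sum>q\<in>Q. \<bar>X t q - Y t q\<bar>) \<le> (\<Sum>q\<in>Q. 2 * K * T)"
      proof (rule sum_mono)
        fix q assume q: "q \<in> Q"
        have "\<bar>X t q - Y t q\<bar> \<le> \<bar>integral {t..T} (\<lambda>s. F q (X s))\<bar> + \<bar>integral {t..T} (\<lambda>s. F q (Y s))\<bar>"
          using diff[OF q t] by linarith
        also have "\<dots> \<le> K * (T - t) + K * (T - t)"
          by (intro add_mono int_bound q t cX cY)
        also have "\<dots> \<le> 2 * K * T" using K t by (simp add: mult_left_mono)
        finally show "\<bar>X t q - Y t q\<bar> \<le> 2 * K * T" .
      qed
      thus "(\<Sum>q\<in>Q. \<bar>X t q - Y t q\<bar>) \<le> A1 * (card Q * L * (T - t)) ^ 0 / fact 0"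
        by (simp add: A1_def)
    qed
  next
    case (Suc n)
    show ?case
    proof
      fix t assume t: "t \<in> {0..T}"
      have "(\<Sum>q\<in>Q. \<bar>X t q - Y t q\<bar>) = (\<Sum>q\<in>Q. \<bar>integral {t..T} (\<lambda>s. F q (X s)) - integral {t..T} (\<lambda>s. F q (Y s))\<bar>)"
        by (rule sum.cong) (use diff t in auto)
      also have "\<dots> \<le> A1 * (card Q * L * (T - t)) ^ Suc n / fact (Suc n)"
        by (rule step[OF cX cY A1 Suc.IH t])
      finally show "(\<Sum>q\<in>Q. \<bar>X t q - Y t q\<bar>) \<le> A1 * (card Q * L * (T - t)) ^ Suc n / fact (Suc n)" .
    qed
  qed
  show ?thesis
  proof (intro ballI)
    fix q t assume q: "q \<in> Q" and t: "t \<in> {0..T}"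
    define c where "c = card Q * L * (T - t)"
    have "summable (\<lambda>n. inverse (fact n) * c ^ n)" by (rule summable_exp)
    hence "(\<lambda>n. inverse (fact n) * c ^ n) \<longlonglongrightarrow> 0" by (rule summable_LIMSEQ_zero)
    hence "(\<lambda>n. A1 * (inverse (fact n) * c ^ n)) \<longlonglongrightarrow> A1 * 0" by (intro tendsto_intros)
    hence lim: "(\<lambda>n. A1 * c ^ n / fact n) \<longlonglongrightarrow> 0" by (simp add: field_simps)
    have "(\<Sum>q\<in>Q. \<bar>X t q - Y t q\<bar>) \<le> 0"
      by (rule tendsto_lowerbound[OF lim]) (use bnd t in \<open>auto simp: c_def\<close>)
    moreover have "\<bar>X t q - Y t q\<bar> \<le> (\<Sum>q\<in>Q. \<bar>X t q - Y t q\<bar>)"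
      by (rule member_le_sum[OF q]) (auto simp: fin)
    ultimately show "X t q = Y t q" by simp
  qed
qed


primrec pic :: "nat \<Rightarrow> real \<Rightarrow> 'q \<Rightarrow> real" where
  "pic 0 = (\<lambda>t q. -1)"
| "pic (Suc n) = (\<lambda>t q. -1 - integral {t..T} (\<lambda>s. F q (pic n s)))"

lemma pic_cont: "\<forall>q\<in>Q. continuous_on {0..T} (\<lambda>t. pic n t q)"
proof (induction n)
  case 0 thus ?case by simp
next
  case (Suc n)
  show ?case
  proof
    fix q assume q: "q \<in> Q"
    have "continuous_on {0..T} (\<lambda>s. F q (pic n s))" by (rule contF[OF q Suc.IH])
    hence "continuous_on {0..T} (\<lambda>t. integral {t..T} (\<lambda>s. F q (pic n s)))" by (rule int_tail_cont)
    thus "continuous_on {0..T} (\<lambda>t. pic (Suc n) t q)" by (auto intro!: continuous_intros)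
  qed
qed

lemma pic_diff:
  "\<forall>t\<in>{0..T}. (\<Sum>q\<in>Q. \<bar>pic (Suc n) t q - pic n t q\<bar>) \<le> (card Q * (K * T)) * (card Q * L * (T - t)) ^ n / fact n"
proof (induction n)
  case 0
  show ?case
  proof
    fix t assume t: "t \<in> {0..T}"
    have "(\<Sum>q\<in>Q. \<bar>pic (Suc 0) t q - pic 0 t q\<bar>) \<le> (\<Sum>q\<in>Q. K * T)"
    proof (rule sum_mono)
      fix q assume q: "q \<in> Q"
      have "\<bar>pic (Suc 0) t q - pic 0 t q\<bar> = \<bar>integral {t..T} (\<lambda>s. F q (pic 0 s))\<bar>" by simp
      also have "\<dots> \<le> K * (T - t)" by (rule int_bound[OF q pic_cont t])
      also have "\<dots> \<le> K * T" using K t by (simp add: mult_left_mono)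
      finally show "\<bar>pic (Suc 0) t q - pic 0 t q\<bar> \<le> K * T" .
    qed
    thus "(\<Sum>q\<in>Q. \<bar>pic (Suc 0) t q - pic 0 t q\<bar>) \<le> (card Q * (K * T)) * (card Q * L * (T - t)) ^ 0 / fact 0"
      by simp
  qed
next
  case (Suc n)
  show ?case
  proof
    fix t assume t: "t \<in> {0..T}"
    have "(\<Sum>q\<in>Q. \<bar>pic (Suc (Suc n)) t q - pic (Suc n) t q\<bar>)
        = (\<Sum>q\<in>Q. \<bar>integral {t..T} (\<lambda>s. F q (pic (Suc n) s)) - integral {t..T} (\<lambda>s. F q (pic n s))\<bar>)"
      by (rule sum.cong) (auto simp del: pic.simps simp: pic.simps(2)[of "Suc n"] pic.simps(2)[of n])
    also have "\<dots> \<le> (card Q * (K * T)) * (card Q * L * (T - t)) ^ Suc n / fact (Suc n)"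
      by (rule step[OF pic_cont pic_cont _ Suc.IH t]) (use K T in simp)
    finally show "(\<Sum>q\<in>Q. \<bar>pic (Suc (Suc n)) t q - pic (Suc n) t q\<bar>)
        \<le> (card Q * (K * T)) * (card Q * L * (T - t)) ^ Suc n / fact (Suc n)" .
  qed
qed

lemma ulim_F:
  assumes q: "q \<in> Q" and ul: "\<forall>q'\<in>Q. uniform_limit S (\<lambda>n s. Xn n s q') (\<lambda>s. X s q') sequentially"
  shows "uniform_limit S (\<lambda>n s. F q (Xn n s)) (\<lambda>s. F q (X s)) sequentially"
proof (rule uniform_limitI)
  fix e :: real assume e: "e > 0"
  define e' where "e' = e / (L * card Q + 1)"
  have "L * card Q + 1 > 0" using L by (simp add: add_nonneg_pos)
  hence e': "e' > 0" using e by (simp add: e'_def)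
  have "\<forall>q'\<in>Q. \<forall>\<^sub>F n in sequentially. \<forall>s\<in>S. dist (Xn n s q') (X s q') < e'"
    using ul e' uniform_limitD by blast
  hence "\<forall>\<^sub>F n in sequentially. \<forall>q'\<in>Q. \<forall>s\<in>S. dist (Xn n s q') (X s q') < e'"
    by (rule eventually_ball_finite[OF fin])
  thus "\<forall>\<^sub>F n in sequentially. \<forall>s\<in>S. dist (F q (Xn n s)) (F q (X s)) < e"
  proof (rule eventually_mono)
    fix n assume h: "\<forall>q'\<in>Q. \<forall>s\<in>S. dist (Xn n s q') (X s q') < e'"
    show "\<forall>s\<in>S. dist (F q (Xn n s)) (F q (X s)) < e"
    proof
      fix s assume s: "s \<in> S"
      have "dist (F q (Xn n s)) (F q (X s)) \<le> L * (\<Sum>q'\<in>Q. \<bar>Xn n s q' - X s q'\<bar>)"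
        using Lip[OF q] by (simp add: dist_real_def)
      also have "\<dots> \<le> L * (card Q * e')"
      proof (rule mult_left_mono[OF _ L])
        have "(\<Sum>q'\<in>Q. \<bar>Xn n s q' - X s q'\<bar>) \<le> of_nat (card Q) * e'"
          by (rule sum_bounded_above) (use h s in \<open>auto simp: dist_real_def less_imp_le\<close>)
        thus "(\<Sum>q'\<in>Q. \<bar>Xn n s q' - X s q'\<bar>) \<le> card Q * e'" by simp
      qed
      also have "\<dots> < e"
      proof -
        have "L * (card Q * e') = e * (L * card Q / (L * card Q + 1))"
          using L by (simp add: e'_def field_simps)
        also have "\<dots> < e * 1"
        proof (intro mult_strict_left_mono e)
          have "L * card Q \<ge> 0" using L by simp
          thus "L * card Q / (L * card Q + 1) < 1" by (simp add: divide_less_eq)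
        qed
        finally show ?thesis by simp
      qed
      finally show "dist (F q (Xn n s)) (F q (X s)) < e" .
    qed
  qed
qed

lemma exist:
  "\<exists>X. (\<forall>q\<in>Q. continuous_on {0..T} (\<lambda>t. X t q)) \<and>
       (\<forall>q\<in>Q. \<forall>t\<in>{0..T}. X t q = -1 - integral {t..T} (\<lambda>s. F q (X s)))"
proof -
  define A0 where "A0 = card Q * (K * T)"
  define c where "c = card Q * L * T"
  have A0: "A0 \<ge> 0" using K T by (simp add: A0_def)
  have c: "c \<ge> 0" using L T by (simp add: c_def)
  define d where "d = (\<lambda>i t q. pic (Suc i) t q - pic i t q)"
  define M where "M = (\<lambda>i. A0 * (inverse (fact i) * c ^ i))"
  have sM: "summable M" unfolding M_def by (intro summable_mult summable_exp)
  have dM: "\<bar>d i t q\<bar> \<le> M i" if q: "q \<in> Q" and t: "t \<in> {0..T}" for i t q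
  proof -
    have "\<bar>d i t q\<bar> \<le> (\<Sum>q\<in>Q. \<bar>pic (Suc i) t q - pic i t q\<bar>)"
      unfolding d_def by (rule member_le_sum[OF q]) (auto simp: fin)
    also have "\<dots> \<le> A0 * (card Q * L * (T - t)) ^ i / fact i"
      using pic_diff t by (simp add: A0_def)
    also have "\<dots> \<le> A0 * c ^ i / fact i"
    proof -
      have "(card Q * L * (T - t)) ^ i \<le> c ^ i"
        using t L by (intro power_mono) (auto simp: c_def intro!: mult_left_mono)
      thus ?thesis using A0 by (intro divide_right_mono mult_left_mono) auto
    qed
    also have "\<dots> = M i" by (simp add: M_def field_simps)
    finally show ?thesis .
  qed
  define X where "X = (\<lambda>t q. -1 + (\<Sum>i. d i t q))"
  have ul: "uniform_limit {0..T} (\<lambda>n t. pic n t q) (\<lambda>t. X t q) sequentially" if q: "q \<in> Q" for q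
  proof -
    have u1: "uniform_limit {0..T} (\<lambda>n t. \<Sum>i<n. d i t q) (\<lambda>t. \<Sum>i. d i t q) sequentially"
      by (rule Weierstrass_m_test[OF _ sM]) (use dM q in auto)
    have "uniform_limit {0..T} (\<lambda>n t. -1 + (\<Sum>i<n. d i t q)) (\<lambda>t. -1 + (\<Sum>i. d i t q)) sequentially"
      by (intro uniform_limit_intros u1)
    moreover have "-1 + (\<Sum>i<n. d i t q) = pic n t q" for n t
      unfolding d_def by (subst sum_lessThan_telescope) simp
    ultimately show ?thesis by (simp add: X_def)
  qed
  have cX: "\<forall>q\<in>Q. continuous_on {0..T} (\<lambda>t. X t q)"
  proof
    fix q assume q: "q \<in> Q"
    show "continuous_on {0..T} (\<lambda>t. X t q)"
      by (rule uniform_limit_theorem[OF _ ul[OF q]]) (use pic_cont q in auto)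
  qed
  have eq: "\<forall>q\<in>Q. \<forall>t\<in>{0..T}. X t q = -1 - integral {t..T} (\<lambda>s. F q (X s))"
  proof (intro ballI)
    fix q t assume q: "q \<in> Q" and t: "t \<in> {0..T}"
    have sub: "{t..T} \<subseteq> {0..T}" using t by auto
    have "(\<lambda>n. pic n t q) \<longlonglongrightarrow> X t q" by (rule tendsto_uniform_limitI[OF ul[OF q] t])
    hence l1: "(\<lambda>n. pic (Suc n) t q) \<longlonglongrightarrow> X t q" by (rule LIMSEQ_Suc)
    have ulF: "uniform_limit {t..T} (\<lambda>n s. F q (pic n s)) (\<lambda>s. F q (X s)) sequentially"
      by (rule ulim_F[OF q]) (use ul uniform_limit_on_subset[OF _ sub] in blast)
    have cF: "continuous_on {t..T} (\<lambda>s. F q (pic n s))" for n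
      by (rule contF[OF q]) (use pic_cont continuous_on_subset[OF _ sub] in blast)
    obtain I J where I: "\<And>n. ((\<lambda>s. F q (pic n s)) has_integral I n) {t..T}"
      and J: "((\<lambda>s. F q (X s)) has_integral J) {t..T}" and IJ: "I \<longlonglongrightarrow> J"
      by (rule uniform_limit_integral[OF ulF cF]) auto
    have "(\<lambda>n. -1 - I n) \<longlonglongrightarrow> -1 - J" by (intro tendsto_intros IJ)
    moreover have "pic (Suc n) t q = -1 - I n" for n using I[of n] by (auto dest: integral_unique)
    ultimately have l2: "(\<lambda>n. pic (Suc n) t q) \<longlonglongrightarrow> -1 - J" by simp
    have "X t q = -1 - J" using LIMSEQ_unique[OF l1 l2] .
    thus "X t q = -1 - integral {t..T} (\<lambda>s. F q (X s))" using J by (auto dest: integral_unique)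
  qed
  show ?thesis using cX eq by blast
qed

end


lemma powr_lip_aux:
  fixes a b x y P :: real
  assumes a: "a > 0" and xy: "a \<le> x" "x < y" "y \<le> b"
  shows "\<bar>y powr P - x powr P\<bar> \<le> \<bar>P\<bar> * (a powr (P - 1) + b powr (P - 1)) * \<bar>y - x\<bar>"
proof -
  have der: "\<And>z. x \<le> z \<Longrightarrow> z \<le> y \<Longrightarrow> ((\<lambda>z. z powr P) has_real_derivative P * z powr (P - 1)) (at z)"
    using a xy by (intro has_real_derivative_powr) auto
  obtain z where z: "x < z" "z < y" "y powr P - x powr P = (y - x) * (P * z powr (P - 1))"
    using MVT2[OF xy(2) der] by blast
  have zpos: "z > 0" using z a xy by auto
  have zb: "z powr (P - 1) \<le> a powr (P - 1) + b powr (P - 1)"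
  proof (cases "P - 1 \<ge> 0")
    case True
    have "z powr (P - 1) \<le> b powr (P - 1)" using True zpos z xy by (intro powr_mono2) auto
    thus ?thesis using powr_ge_zero[of a "P - 1"] by linarith
  next
    case False
    have "z powr (P - 1) \<le> a powr (P - 1)" using False a z xy by (intro powr_mono2') auto
    thus ?thesis using powr_ge_zero[of b "P - 1"] by linarith
  qed
  have "\<bar>y powr P - x powr P\<bar> = \<bar>y - x\<bar> * (\<bar>P\<bar> * z powr (P - 1))"
    using z(3) by (simp add: abs_mult)
  also have "\<dots> \<le> \<bar>y - x\<bar> * (\<bar>P\<bar> * (a powr (P - 1) + b powr (P - 1)))"
    by (intro mult_left_mono zb) auto
  finally show ?thesis by (simp add: mult_ac)
qed

lemma powr_lip:
  fixes a b x y P :: real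
  assumes a: "a > 0" and x: "a \<le> x" "x \<le> b" and y: "a \<le> y" "y \<le> b"
  shows "\<bar>x powr P - y powr P\<bar> \<le> \<bar>P\<bar> * (a powr (P - 1) + b powr (P - 1)) * \<bar>x - y\<bar>"
proof (cases x y rule: linorder_cases)
  case less
  thus ?thesis using powr_lip_aux[OF a x(1) less y(2), of P] by (simp add: abs_minus_commute)
next
  case greater
  thus ?thesis using powr_lip_aux[OF a y(1) greater x(2), of P] by (simp add: abs_minus_commute)
qed simp

lemma ratio_lip:
  fixes a a' b b' m M R :: real
  assumes m: "m > 0" and a: "\<bar>a\<bar> \<le> M" and a': "\<bar>a'\<bar> \<le> M" and b: "b \<le> -m" "- R \<le> b" and b': "b' \<le> -m" "- R \<le> b'"
  shows "\<bar>a / b - a' / b'\<bar> \<le> (R * \<bar>a - a'\<bar> + M * \<bar>b - b'\<bar>) / m^2"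
proof -
  have nb: "m \<le> -b" "m \<le> -b'" "0 \<le> m" using b b' m by linarith+
  have "m * m \<le> (-b) * (-b')" by (rule mult_mono[OF nb(1) nb(2)]) (use nb in linarith)+
  hence bb: "b * b' \<ge> m^2" by (simp add: power2_eq_square)
  have "m^2 > 0" using m by simp
  hence bb0: "b * b' > 0" using bb by linarith
  have "b \<noteq> 0" "b' \<noteq> 0" using nb m by linarith+
  hence "a / b - a' / b' = (a * b' - a' * b) / (b * b')" by (rule diff_frac_eq)
  also have "a * b' - a' * b = (a - a') * b' + a' * (b' - b)" by (simp add: algebra_simps)
  finally have "a / b - a' / b' = ((a - a') * b' + a' * (b' - b)) / (b * b')" .
  hence "\<bar>a / b - a' / b'\<bar> = \<bar>(a - a') * b' + a' * (b' - b)\<bar> / (b * b')"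
    by (simp only: abs_divide abs_of_pos[OF bb0])
  also have "\<dots> \<le> (R * \<bar>a - a'\<bar> + M * \<bar>b - b'\<bar>) / (b * b')"
  proof (rule divide_right_mono)
    have "b' < 0" using nb m by linarith
    hence "\<bar>b'\<bar> = - b'" by simp
    hence rb: "\<bar>b'\<bar> \<le> R" using b' by linarith
    have "\<bar>a - a'\<bar> * \<bar>b'\<bar> \<le> \<bar>a - a'\<bar> * R" by (rule mult_left_mono[OF rb abs_ge_zero])
    hence h1: "\<bar>(a - a') * b'\<bar> \<le> R * \<bar>a - a'\<bar>" by (simp add: abs_mult mult.commute)
    have "\<bar>a'\<bar> * \<bar>b' - b\<bar> \<le> M * \<bar>b' - b\<bar>" by (rule mult_right_mono[OF a' abs_ge_zero])
    hence h2: "\<bar>a' * (b' - b)\<bar> \<le> M * \<bar>b - b'\<bar>" by (simp add: abs_mult abs_minus_commute)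
    show "\<bar>(a - a') * b' + a' * (b' - b)\<bar> \<le> R * \<bar>a - a'\<bar> + M * \<bar>b - b'\<bar>"
      using abs_triangle_ineq[of "(a - a') * b'" "a' * (b' - b)"] h1 h2 by linarith
    show "0 \<le> b * b'" using bb0 by linarith
  qed
  also have "\<dots> \<le> (R * \<bar>a - a'\<bar> + M * \<bar>b - b'\<bar>) / m^2"
  proof (rule divide_left_mono[OF bb])
    have M0: "M \<ge> 0" using a abs_ge_zero[of a] by linarith
    have R0: "R \<ge> 0" using b m by linarith
    have "0 \<le> R * \<bar>a - a'\<bar>" using R0 by simp
    moreover have "0 \<le> M * \<bar>b - b'\<bar>" using M0 by simp
    ultimately show "0 \<le> R * \<bar>a - a'\<bar> + M * \<bar>b - b'\<bar>" by linarith
    show "0 < b * b' * m\<^sup>2" using bb0 \<open>m^2 > 0\<close> by simp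
  qed
  finally show ?thesis .
qed

definition clampr :: "real \<Rightarrow> real \<Rightarrow> real \<Rightarrow> real" where
  "clampr lo hi z = max lo (min hi z)"

lemma clampr_lip: "lo \<le> hi \<Longrightarrow> \<bar>clampr lo hi x - clampr lo hi y\<bar> \<le> \<bar>x - y\<bar>"
  unfolding clampr_def by linarith

lemma clampr_range: "lo \<le> hi \<Longrightarrow> lo \<le> clampr lo hi x \<and> clampr lo hi x \<le> hi"
  by (auto simp: clampr_def)

lemma clampr_id: "lo \<le> x \<Longrightarrow> x \<le> hi \<Longrightarrow> clampr lo hi x = x"
  by (auto simp: clampr_def)

lemma clampr_mono: "x \<le> y \<Longrightarrow> clampr lo hi x \<le> clampr lo hi y"
  by (auto simp: clampr_def)


lemma ratio_bounds:
  fixes a b m M R :: real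
  assumes "m > 0" "- M \<le> a" "a \<le> - m" "- R \<le> b" "b \<le> - m"
  shows "m / R \<le> a / b" "a / b \<le> M / m"
proof -
  have e: "a / b = (- a) / (- b)" by simp
  show "m / R \<le> a / b" unfolding e by (rule frac_le) (use assms in linarith)+
  show "a / b \<le> M / m" unfolding e by (rule frac_le) (use assms in linarith)+
qed

lemma ratio_le1:
  fixes a D :: real
  assumes "a < 0" "D \<le> a"
  shows "0 \<le> a / D" "a / D \<le> 1"
proof -
  have D: "D < 0" using assms by linarith
  show "0 \<le> a / D" by (rule divide_nonpos_nonpos) (use assms D in linarith)+
  show "a / D \<le> 1" using D assms by (subst neg_divide_le_eq) auto
qed

lemma sum_le_single:
  fixes f :: "'a \<Rightarrow> real"
  assumes "finite S" "S \<noteq> {}" "\<forall>i\<in>S. f i \<le> a" "a \<le> 0"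
  shows "sum f S \<le> a"
proof -
  have "sum f S \<le> of_nat (card S) * a" by (rule sum_bounded_above) (use assms in auto)
  also have "\<dots> \<le> 1 * a"
  proof (rule mult_right_mono_neg)
    have "card S \<ge> 1" using assms by (simp add: Suc_le_eq card_gt_0_iff)
    thus "1 \<le> real (card S)" by simp
  qed (use assms in simp)
  finally show ?thesis by simp
qed

lemma sum_ge_card:
  fixes f :: "'a \<Rightarrow> real"
  assumes "finite S" "\<forall>i\<in>S. a \<le> f i" "card S \<le> n" "a \<le> 0"
  shows "real n * a \<le> sum f S"
proof -
  have "real n * a \<le> real (card S) * a" using assms by (intro mult_right_mono_neg) auto
  also have "\<dots> = (\<Sum>i\<in>S. a)" by simp
  also have "\<dots> \<le> sum f S" by (rule sum_mono) (use assms in auto)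
  finally show ?thesis .
qed

locale sys =
  fixes N qbar :: nat and T A k sig c varpi eta :: real and gamma :: "nat \<Rightarrow> real"
  assumes N: "N \<ge> 1" and T: "T > 0" and A: "A > 0" and k: "k > 0" and sig: "sig > 0"
    and c: "c > 0" and varpi: "varpi > 0" and eta: "eta > 0" and gam: "\<forall>i<N. gamma i > 0"
begin

definition "Q = Qset N qbar"
definition "P = k * varpi / (sig * eta)"
definition "Cc = Cconst N gamma A k sig c varpi eta"
definition "CSq = CS N gamma eta sig"
definition "B = (\<Sum>q\<in>Q. CSq q)"
definition "m = exp (- (2 * Cc * T))"
definition "M = exp (B * T)"
definition "clv = clampr (-M) (-m)"
definition "cp = clampr (-(M+1)) (M+1)"
definition "act q j = active N qbar gamma q j"
definition "nb q i j = ominus q i (phi j)"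
definition "Jt q j x = (if act q j = {} then 0 else (clv (x q) / (\<Sum>i\<in>act q j. clv (x (nb q i j)))) powr P)"
definition "Gt q x = - CSq q + Cc * (Jt q Side_a x + Jt q Side_b x)"
definition "Ft q x = cp (x q) * Gt q x"

lemma finQ: "finite Q"
proof -
  have "Q \<subseteq> {f. \<forall>x. (x \<in> {..<N} \<longrightarrow> f x \<in> {- int qbar..int qbar}) \<and> (x \<notin> {..<N} \<longrightarrow> f x = 0)}"
    by (auto simp: Q_def Qset_def)
  thus ?thesis by (rule finite_subset) (rule finite_set_of_finite_funs; simp)
qed

lemma P: "P > 0" using k varpi sig eta by (simp add: P_def)

lemma CS_nonneg: "CSq q \<ge> 0"
proof -
  have "(\<Sum>i<N. eta / 2 * sig^2 * gamma i *
        (real_of_int (q i) - (\<Sum>j<N. mu N gamma eta i j * gamma j * real_of_int (q j)))^2) \<ge> 0"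
  proof (rule sum_nonneg)
    fix i assume "i \<in> {..<N}"
    hence "gamma i > 0" using gam by auto
    hence "eta / 2 * sig^2 * gamma i \<ge> 0" using eta by simp
    thus "eta / 2 * sig^2 * gamma i *
        (real_of_int (q i) - (\<Sum>j<N. mu N gamma eta i j * gamma j * real_of_int (q j)))^2 \<ge> 0"
      by (rule mult_nonneg_nonneg) simp
  qed
  thus ?thesis unfolding CSq_def CS_def using eta by (intro add_nonneg_nonneg) auto
qed

lemma Cc: "Cc > 0"
proof -
  define S where "S = 1 + eta * sig * (\<Sum>i<N. 1 / (k * varpi + sig * gamma i))"
  have "(\<Sum>i<N. 1 / (k * varpi + sig * gamma i)) \<ge> 0"
    using gam k varpi sig by (intro sum_nonneg) (auto intro!: add_pos_pos less_imp_le)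
  hence S: "S > 0" using eta sig unfolding S_def by (intro add_pos_nonneg) auto
  have f: "sig * eta / (k * varpi + sig * eta) > 0" using sig eta k varpi
    by (intro divide_pos_pos mult_pos_pos add_pos_pos)
  show ?thesis unfolding Cc_def Cconst_def Let_def S_def[symmetric]
    by (intro mult_pos_pos A f S exp_gt_zero)
qed

lemma B: "B \<ge> 0" unfolding B_def by (intro sum_nonneg CS_nonneg)
lemma CS_le_B: "q \<in> Q \<Longrightarrow> CSq q \<le> B"
  unfolding B_def by (rule member_le_sum) (auto intro: CS_nonneg finQ)

lemma m: "m > 0" "m \<le> 1" using Cc T by (auto simp: m_def)
lemma M: "M \<ge> 1" using B T by (simp add: M_def)

lemma clv_range: "- M \<le> clv z" "clv z \<le> - m"
  using clampr_range[of "-M" "-m" z] m M by (auto simp: clv_def)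
lemma cp_range: "\<bar>cp z\<bar> \<le> M + 1"
  using clampr_range[of "-(M+1)" "M+1" z] M by (auto simp: cp_def)

lemma act_sub: "act q j \<subseteq> {..<N}"
  by (auto simp: act_def active_def Gset_def)
lemma act_fin: "finite (act q j)" using act_sub finite_subset by blast
lemma act_card: "card (act q j) \<le> N"
  using card_mono[OF _ act_sub] by simp

lemma nb_in: assumes "q \<in> Q" "i \<in> act q j" shows "nb q i j \<in> Q"
proof -
  have i: "i < N" "phi j * q i > - int qbar" using assms(2) by (auto simp: act_def active_def Gset_def)
  have qb: "- int qbar \<le> q i" "q i \<le> int qbar" using assms(1) i(1) by (auto simp: Q_def Qset_def)
  have "- int qbar \<le> q i - phi j \<and> q i - phi j \<le> int qbar"
    using i(2) qb by (cases j) auto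
  thus ?thesis using assms(1) i(1) by (auto simp: Q_def Qset_def nb_def ominus_def)
qed

lemma nb_inj: "inj_on (\<lambda>i. nb q i j) (act q j)"
proof (rule inj_onI)
  fix i i' assume "i \<in> act q j" "i' \<in> act q j" and e: "nb q i j = nb q i' j"
  show "i = i'"
  proof (rule ccontr)
    assume "i \<noteq> i'"
    have "nb q i j i = q i - phi j" by (simp add: nb_def ominus_def)
    moreover have "nb q i' j i = q i" using \<open>i \<noteq> i'\<close> by (simp add: nb_def ominus_def)
    moreover have "phi j \<noteq> 0" by (cases j) auto
    ultimately show False using e by simp
  qed
qed

lemma sum_nb_le:
  assumes q: "q \<in> Q" and f: "\<forall>q'\<in>Q. f q' \<ge> (0::real)"
  shows "(\<Sum>i\<in>act q j. f (nb q i j)) \<le> (\<Sum>q'\<in>Q. f q')"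
proof -
  have "(\<Sum>i\<in>act q j. f (nb q i j)) = (\<Sum>q'\<in>(\<lambda>i. nb q i j) ` act q j. f q')"
    by (rule sum.reindex[OF nb_inj, symmetric, unfolded comp_def])
  also have "\<dots> \<le> (\<Sum>q'\<in>Q. f q')"
    by (rule sum_mono2[OF finQ]) (use nb_in q f in auto)
  finally show ?thesis .
qed


definition dQ :: "((nat \<Rightarrow> int) \<Rightarrow> real) \<Rightarrow> ((nat \<Rightarrow> int) \<Rightarrow> real) \<Rightarrow> real" where "dQ x y = (\<Sum>q'\<in>Q. \<bar>x q' - y q'\<bar>)"
definition "LJ = P * ((m / (N * M)) powr (P - 1) + (M / m) powr (P - 1)) * (N * M + M) / m^2"
definition "KG = B + Cc * (2 * (M / m) powr P)"
definition "LF = KG + (M + 1) * (Cc * (2 * LJ))"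
definition "KF = (M + 1) * KG"

lemma dQ_nonneg: "dQ x y \<ge> 0" unfolding dQ_def by (intro sum_nonneg) auto
lemma dQ_ge: "q \<in> Q \<Longrightarrow> \<bar>x q - y q\<bar> \<le> dQ x y"
  unfolding dQ_def by (rule member_le_sum) (auto simp: finQ)

lemma NM: "real N * M > 0" using N M by simp

lemma LJ: "LJ \<ge> 0"
  unfolding LJ_def using P m M NM by (intro divide_nonneg_pos mult_nonneg_nonneg add_nonneg_nonneg) auto
lemma KG: "KG \<ge> 0" unfolding KG_def using B Cc by (intro add_nonneg_nonneg mult_nonneg_nonneg) auto
lemma LF: "LF \<ge> 0" unfolding LF_def using KG M Cc LJ by (intro add_nonneg_nonneg mult_nonneg_nonneg) auto
lemma KF: "KF \<ge> 0" unfolding KF_def using KG M by (intro mult_nonneg_nonneg) auto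

lemma den_bounds:
  assumes "act q j \<noteq> {}"
  shows "(\<Sum>i\<in>act q j. clv (x (nb q i j))) \<le> - m" "- (real N * M) \<le> (\<Sum>i\<in>act q j. clv (x (nb q i j)))"
proof -
  show "(\<Sum>i\<in>act q j. clv (x (nb q i j))) \<le> - m"
    by (rule sum_le_single) (use assms act_fin clv_range m in auto)
  have "real N * (- M) \<le> (\<Sum>i\<in>act q j. clv (x (nb q i j)))"
    by (rule sum_ge_card) (use act_fin clv_range act_card M in auto)
  thus "- (real N * M) \<le> (\<Sum>i\<in>act q j. clv (x (nb q i j)))" by simp
qed

lemma ratio_rng:
  assumes "act q j \<noteq> {}"
  shows "m / (real N * M) \<le> clv (x q) / (\<Sum>i\<in>act q j. clv (x (nb q i j)))"
    "clv (x q) / (\<Sum>i\<in>act q j. clv (x (nb q i j))) \<le> M / m"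
  using ratio_bounds[OF m(1) clv_range(1)[of "x q"] clv_range(2)[of "x q"] den_bounds(2)[OF assms, where x=x] den_bounds(1)[OF assms, where x=x]] by auto

lemma Jt_nonneg: "Jt q j x \<ge> 0" by (simp add: Jt_def)

lemma Jt_le: "Jt q j x \<le> (M / m) powr P"
proof (cases "act q j = {}")
  case True thus ?thesis by (simp add: Jt_def)
next
  case False
  have "m / (real N * M) > 0" using m NM by simp
  hence lo: "0 \<le> clv (x q) / (\<Sum>i\<in>act q j. clv (x (nb q i j)))"
    using ratio_rng(1)[OF False, where x=x] by linarith
  show ?thesis unfolding Jt_def using False
    by (simp add: powr_mono2 P less_imp_le lo ratio_rng(2)[OF False])
qed

lemma Jt_lip:
  assumes q: "q \<in> Q"
  shows "\<bar>Jt q j x - Jt q j y\<bar> \<le> LJ * dQ x y"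
proof (cases "act q j = {}")
  case True thus ?thesis using mult_nonneg_nonneg[OF LJ dQ_nonneg] by (simp add: Jt_def)
next
  case False
  define a where "a = clv (x q)"
  define a' where "a' = clv (y q)"
  define b where "b = (\<Sum>i\<in>act q j. clv (x (nb q i j)))"
  define b' where "b' = (\<Sum>i\<in>act q j. clv (y (nb q i j)))"
  define lo where "lo = m / (real N * M)"
  define hi where "hi = M / m"
  have lo: "lo > 0" using m NM by (simp add: lo_def)
  have r1: "lo \<le> a / b" "a / b \<le> hi" using ratio_rng[OF False, where x=x] by (auto simp: a_def b_def lo_def hi_def)
  have r2: "lo \<le> a' / b'" "a' / b' \<le> hi" using ratio_rng[OF False, where x=y] by (auto simp: a'_def b'_def lo_def hi_def)
  have "\<bar>(a / b) powr P - (a' / b') powr P\<bar> \<le> \<bar>P\<bar> * (lo powr (P - 1) + hi powr (P - 1)) * \<bar>a / b - a' / b'\<bar>"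
    by (rule powr_lip[OF lo r1 r2])
  also have "\<bar>a / b - a' / b'\<bar> \<le> (real N * M * \<bar>a - a'\<bar> + M * \<bar>b - b'\<bar>) / m^2"
  proof (rule ratio_lip[OF m(1)])
    show "\<bar>a\<bar> \<le> M" "\<bar>a'\<bar> \<le> M" using clv_range[of "x q"] clv_range[of "y q"] m
      by (auto simp: a_def a'_def)
    show "b \<le> - m" "- (real N * M) \<le> b" using den_bounds[OF False, where x=x] by (auto simp: b_def)
    show "b' \<le> - m" "- (real N * M) \<le> b'" using den_bounds[OF False, where x=y] by (auto simp: b'_def)
  qed
  also have "\<dots> \<le> (real N * M * dQ x y + M * dQ x y) / m^2"
  proof (rule divide_right_mono)
    have "\<bar>a - a'\<bar> \<le> \<bar>x q - y q\<bar>" unfolding a_def a'_def clv_def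
      by (rule clampr_lip) (use m M in linarith)
    also have "\<dots> \<le> dQ x y" by (rule dQ_ge[OF q])
    finally have ha: "\<bar>a - a'\<bar> \<le> dQ x y" .
    have "\<bar>b - b'\<bar> = \<bar>\<Sum>i\<in>act q j. clv (x (nb q i j)) - clv (y (nb q i j))\<bar>"
      by (simp add: b_def b'_def sum_subtractf)
    also have "\<dots> \<le> (\<Sum>i\<in>act q j. \<bar>clv (x (nb q i j)) - clv (y (nb q i j))\<bar>)" by (rule sum_abs)
    also have "\<dots> \<le> (\<Sum>i\<in>act q j. \<bar>x (nb q i j) - y (nb q i j)\<bar>)"
      by (rule sum_mono) (unfold clv_def, rule clampr_lip, use m M in linarith)
    also have "\<dots> \<le> dQ x y" unfolding dQ_def by (rule sum_nb_le[OF q]) auto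
    finally have hb: "\<bar>b - b'\<bar> \<le> dQ x y" .
    have "real N * M * \<bar>a - a'\<bar> \<le> real N * M * dQ x y" using ha NM by (intro mult_left_mono) auto
    moreover have "M * \<bar>b - b'\<bar> \<le> M * dQ x y" using hb M by (intro mult_left_mono) auto
    ultimately show "real N * M * \<bar>a - a'\<bar> + M * \<bar>b - b'\<bar> \<le> real N * M * dQ x y + M * dQ x y" by linarith
  qed simp
  finally have "\<bar>(a / b) powr P - (a' / b') powr P\<bar>
      \<le> \<bar>P\<bar> * (lo powr (P - 1) + hi powr (P - 1)) * ((real N * M * dQ x y + M * dQ x y) / m^2)"
    by (simp add: mult_left_mono)
  also have "\<dots> = LJ * dQ x y" using P by (simp add: LJ_def lo_def hi_def field_simps)
  finally show ?thesis using False by (simp add: Jt_def a_def a'_def b_def b'_def)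
qed


lemma Gt_bound: "q \<in> Q \<Longrightarrow> \<bar>Gt q x\<bar> \<le> KG"
proof -
  assume q: "q \<in> Q"
  have "0 \<le> Jt q Side_a x + Jt q Side_b x" using Jt_nonneg by (simp add: add_nonneg_nonneg)
  moreover have "Jt q Side_a x + Jt q Side_b x \<le> 2 * (M / m) powr P" using Jt_le[of q Side_a x] Jt_le[of q Side_b x] by simp
  ultimately have "0 \<le> Cc * (Jt q Side_a x + Jt q Side_b x)" "Cc * (Jt q Side_a x + Jt q Side_b x) \<le> Cc * (2 * (M / m) powr P)"
    using Cc by (auto intro: mult_left_mono)
  thus ?thesis using CS_nonneg[of q] CS_le_B[OF q] by (simp add: Gt_def KG_def abs_le_iff)
qed

lemma Gt_lip: "q \<in> Q \<Longrightarrow> \<bar>Gt q x - Gt q y\<bar> \<le> Cc * (2 * LJ) * dQ x y"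
proof -
  assume q: "q \<in> Q"
  have "\<bar>Gt q x - Gt q y\<bar> = Cc * \<bar>(Jt q Side_a x - Jt q Side_a y) + (Jt q Side_b x - Jt q Side_b y)\<bar>"
  proof -
    have "Gt q x - Gt q y = Cc * ((Jt q Side_a x - Jt q Side_a y) + (Jt q Side_b x - Jt q Side_b y))"
      by (simp add: Gt_def algebra_simps)
    thus ?thesis using Cc by (simp add: abs_mult)
  qed
  also have "\<dots> \<le> Cc * (LJ * dQ x y + LJ * dQ x y)"
  proof (rule mult_left_mono)
    show "\<bar>(Jt q Side_a x - Jt q Side_a y) + (Jt q Side_b x - Jt q Side_b y)\<bar> \<le> LJ * dQ x y + LJ * dQ x y"
      using abs_triangle_ineq[of "Jt q Side_a x - Jt q Side_a y" "Jt q Side_b x - Jt q Side_b y"]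
        Jt_lip[OF q, of Side_a x y] Jt_lip[OF q, of Side_b x y] by linarith
  qed (use Cc in simp)
  finally show ?thesis by (simp add: algebra_simps)
qed

lemma Ft_bound: "q \<in> Q \<Longrightarrow> \<bar>Ft q x\<bar> \<le> KF"
  unfolding Ft_def KF_def abs_mult by (rule mult_mono[OF cp_range Gt_bound]) (use M in auto)

lemma Ft_lip: "q \<in> Q \<Longrightarrow> \<bar>Ft q x - Ft q y\<bar> \<le> LF * dQ x y"
proof -
  assume q: "q \<in> Q"
  have e: "Ft q x - Ft q y = (cp (x q) - cp (y q)) * Gt q x + cp (y q) * (Gt q x - Gt q y)"
    by (simp add: Ft_def algebra_simps)
  have "\<bar>(cp (x q) - cp (y q)) * Gt q x\<bar> \<le> dQ x y * KG"
  proof -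
    have "\<bar>cp (x q) - cp (y q)\<bar> \<le> \<bar>x q - y q\<bar>" unfolding cp_def by (rule clampr_lip) (use M in linarith)
    also have "\<dots> \<le> dQ x y" by (rule dQ_ge[OF q])
    finally show ?thesis unfolding abs_mult by (rule mult_mono[OF _ Gt_bound[OF q]]) (auto simp: dQ_nonneg)
  qed
  moreover have "\<bar>cp (y q) * (Gt q x - Gt q y)\<bar> \<le> (M + 1) * (Cc * (2 * LJ) * dQ x y)"
    unfolding abs_mult by (rule mult_mono[OF cp_range Gt_lip[OF q]]) (use M in auto)
  ultimately have "\<bar>Ft q x - Ft q y\<bar> \<le> dQ x y * KG + (M + 1) * (Cc * (2 * LJ) * dQ x y)"
    unfolding e using abs_triangle_ineq by (smt (verit))
  thus ?thesis by (simp add: LF_def algebra_simps)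
qed

lemma ode_inst: "ode Q Ft LF KF T"
  by unfold_locales (use finQ Ft_lip LF Ft_bound T KF in \<open>auto simp: dQ_def\<close>)

end


context sys begin

lemma Gset_fin: "finite (Gset N gamma)"
  by (rule finite_subset[of _ "{..<N}"]) (auto simp: Gset_def)

lemma denom_eq:
  "denom N qbar gamma v t q j = (\<Sum>i\<in>act q j. v t (nb q i j))"
proof -
  have "denom N qbar gamma v t q j = (\<Sum>i\<in>Gset N gamma. if phi j * q i > - int qbar then v t (ominus q i (phi j)) else 0)"
    unfolding denom_def by (rule sum.cong) auto
  also have "\<dots> = (\<Sum>i\<in>{i \<in> Gset N gamma. phi j * q i > - int qbar}. v t (ominus q i (phi j)))"
    by (rule sum.inter_filter[OF Gset_fin, symmetric])
  finally show ?thesis by (simp add: act_def active_def nb_def)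
qed

lemma Ft_eq:
  assumes q: "q \<in> Q" and rng: "\<forall>q'\<in>Q. - M \<le> v t q' \<and> v t q' \<le> - m"
  shows "Ft q (v t) = - v t q * CSq q + v t q * Cc * (\<Sum>j\<in>{Side_a, Side_b}. jterm N qbar gamma P v t q j)"
proof -
  have clv_id: "clv (v t q') = v t q'" if "q' \<in> Q" for q'
    unfolding clv_def by (rule clampr_id) (use rng that in auto)
  have "- M \<le> v t q" "v t q \<le> - m" using rng q by auto
  hence cp_id: "cp (v t q) = v t q"
    unfolding cp_def using M m by (intro clampr_id) linarith+
  have J: "Jt q j (v t) = jterm N qbar gamma P v t q j" for j
  proof (cases "act q j = {}")
    case True thus ?thesis by (simp add: Jt_def jterm_def act_def)
  next
    case False
    have "(\<Sum>i\<in>act q j. clv (v t (nb q i j))) = (\<Sum>i\<in>act q j. v t (nb q i j))"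
      by (rule sum.cong) (auto intro: clv_id nb_in[OF q])
    thus ?thesis using False by (simp add: Jt_def jterm_def act_def[symmetric] denom_eq clv_id[OF q])
  qed
  show ?thesis by (simp add: Ft_def Gt_def cp_id J algebra_simps)
qed

lemma wd:
  assumes q: "q \<in> Q" and rng: "\<forall>q'\<in>Q. - M \<le> v t q' \<and> v t q' \<le> - m"
  shows "well_defined N qbar gamma v t q"
  unfolding well_defined_def
proof (intro allI impI)
  fix j assume ne: "active N qbar gamma q j \<noteq> {}"
  have "(\<Sum>i\<in>act q j. v t (nb q i j)) \<le> - m"
    by (rule sum_le_single) (use ne act_fin rng nb_in[OF q] m in \<open>auto simp: act_def\<close>)
  hence d: "denom N qbar gamma v t q j \<le> - m" by (simp add: denom_eq)
  hence "denom N qbar gamma v t q j \<noteq> 0" using m by auto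
  moreover have "v t q / denom N qbar gamma v t q j \<ge> 0"
    by (rule divide_nonpos_nonpos) (use rng q d m in auto)
  ultimately show "denom N qbar gamma v t q j \<noteq> 0 \<and> 0 \<le> v t q / denom N qbar gamma v t q j" by simp
qed

lemma Jt_le1:
  assumes q: "q \<in> Q" and neg: "x q < 0" and mx: "\<forall>q'\<in>Q. x q' \<le> x q"
  shows "Jt q j x \<le> 1"
proof (cases "act q j = {}")
  case True thus ?thesis by (simp add: Jt_def)
next
  case False
  have each: "\<forall>i\<in>act q j. clv (x (nb q i j)) \<le> clv (x q)"
    using mx nb_in[OF q] by (auto simp: clv_def intro: clampr_mono)
  have c0: "clv (x q) \<le> 0" using clv_range(2)[of "x q"] m by linarith
  have "(\<Sum>i\<in>act q j. clv (x (nb q i j))) \<le> clv (x q)"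
    by (rule sum_le_single[OF act_fin False each c0])
  moreover have "clv (x q) < 0" using clv_range(2)[of "x q"] m by linarith
  ultimately have "0 \<le> clv (x q) / (\<Sum>i\<in>act q j. clv (x (nb q i j)))" "clv (x q) / (\<Sum>i\<in>act q j. clv (x (nb q i j))) \<le> 1"
    using ratio_le1 by auto
  thus ?thesis using False P by (simp add: Jt_def powr_le1)
qed

lemma jterm_nonneg: "jterm N qbar gamma P v t q j \<ge> 0" by (simp add: jterm_def)

lemma jterm_le1:
  assumes q: "q \<in> Q" and neg: "v t q < 0" and mx: "\<forall>q'\<in>Q. v t q' \<le> v t q"
  shows "jterm N qbar gamma P v t q j \<le> 1"
proof (cases "act q j = {}")
  case True thus ?thesis by (simp add: jterm_def act_def)
next
  case False
  have "(\<Sum>i\<in>act q j. v t (nb q i j)) \<le> v t q"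
    by (rule sum_le_single) (use False act_fin mx nb_in[OF q] neg in auto)
  hence "0 \<le> v t q / denom N qbar gamma v t q j" "v t q / denom N qbar gamma v t q j \<le> 1"
    using ratio_le1[OF neg] by (auto simp: denom_eq)
  thus ?thesis using False P by (simp add: jterm_def act_def[symmetric] powr_le1)
qed

lemma conv_bounds:
  assumes t: "t \<in> {0..T}" and h: "- exp (B * (T - t)) \<le> z \<and> z \<le> - exp (- (2 * Cc * (T - t)))"
  shows "- M \<le> z \<and> z \<le> - m"
proof -
  have "exp (B * (T - t)) \<le> M" unfolding M_def using B t by (simp add: mult_left_mono)
  moreover have "m \<le> exp (- (2 * Cc * (T - t)))" unfolding m_def using Cc t by (simp add: mult_left_mono)
  ultimately show ?thesis using h by linarith
qed

lemma exist_sol: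
  "\<exists>v. is_solution N qbar T A k sig c varpi eta gamma v \<and> (\<forall>t\<in>{0..T}. \<forall>q\<in>Q. - M \<le> v t q \<and> v t q \<le> - m)"
proof -
  interpret O: ode Q Ft LF KF T by (rule ode_inst)
  obtain X where cX: "\<forall>q\<in>Q. continuous_on {0..T} (\<lambda>t. X t q)"
    and eqX: "\<forall>q\<in>Q. \<forall>t\<in>{0..T}. X t q = -1 - integral {t..T} (\<lambda>s. Ft q (X s))"
    using O.exist by blast
  have der: "((\<lambda>t. X t q) has_real_derivative Ft q (X t)) (at t within {0..T})" if "q \<in> Q" "t \<in> {0..T}" for q t
    by (rule O.int_deriv[OF cX eqX that])
  have endv: "\<forall>q\<in>Q. X T q = -1" using eqX T by auto
  have ap: "\<forall>q\<in>Q. \<forall>t\<in>{0..T}. - exp (B * (T - t)) \<le> X t q \<and> X t q \<le> - exp (- (2 * Cc * (T - t)))"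
  proof (rule apriori[OF finQ _ Cc B cX endv, where D="\<lambda>t q. Ft q (X t)" and Mb="M+1" and CS=CSq
        and Ja="\<lambda>t q. Jt q Side_a (X t)" and Jb="\<lambda>t q. Jt q Side_b (X t)"])
    show "0 \<le> T" using T by simp
    show "\<forall>q\<in>Q. \<forall>t\<in>{0..<T}. ((\<lambda>t. X t q) has_real_derivative Ft q (X t)) (at t within {0..T})"
      using der by auto
    show "\<forall>q\<in>Q. \<forall>t\<in>{0..<T}. \<bar>X t q\<bar> \<le> M + 1 \<longrightarrow> Ft q (X t) = X t q * (- CSq q + Cc * (Jt q Side_a (X t) + Jt q Side_b (X t)))"
    proof (intro ballI impI)
      fix q t assume "\<bar>X t q\<bar> \<le> M + 1"
      hence "cp (X t q) = X t q" unfolding cp_def by (intro clampr_id) auto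
      thus "Ft q (X t) = X t q * (- CSq q + Cc * (Jt q Side_a (X t) + Jt q Side_b (X t)))"
        by (simp add: Ft_def Gt_def)
    qed
    show "\<forall>q\<in>Q. 0 \<le> CSq q \<and> CSq q \<le> B" using CS_nonneg CS_le_B by auto
    show "\<forall>q\<in>Q. \<forall>t\<in>{0..<T}. 0 \<le> Jt q Side_a (X t) \<and> 0 \<le> Jt q Side_b (X t)" using Jt_nonneg by auto
    show "\<forall>q\<in>Q. \<forall>t\<in>{0..<T}. X t q < 0 \<and> (\<forall>q'\<in>Q. X t q' \<le> X t q) \<longrightarrow> Jt q Side_a (X t) \<le> 1 \<and> Jt q Side_b (X t) \<le> 1"
      using Jt_le1 by auto
    show "exp (B * T) < M + 1" by (simp add: M_def)
  qed
  have rng: "\<forall>t\<in>{0..T}. \<forall>q\<in>Q. - M \<le> X t q \<and> X t q \<le> - m"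
    using ap conv_bounds by blast
  have "is_solution N qbar T A k sig c varpi eta gamma X"
    unfolding is_solution_def Q_def[symmetric]
  proof (intro ballI conjI)
    fix q assume q: "q \<in> Q"
    show "continuous_on {0..T} (\<lambda>t. X t q)" using cX q by auto
    show "X T q = -1" using endv q by auto
    fix t assume t: "t \<in> {0..<T}"
    have r: "\<forall>q'\<in>Q. - M \<le> X t q' \<and> X t q' \<le> - m" using rng t by auto
    show "well_defined N qbar gamma X t q" by (rule wd[where v=X and t=t, OF q r])
    show "((\<lambda>s. X s q) has_real_derivative
               (- X t q * CS N gamma eta sig q
                + X t q * Cconst N gamma A k sig c varpi eta *
                  (\<Sum>j\<in>{Side_a, Side_b}. jterm N qbar gamma (k * varpi / (sig * eta)) X t q j)))
             (at t within {0..T})"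
    proof -
      have d: "((\<lambda>s. X s q) has_real_derivative Ft q (X t)) (at t within {0..T})" using der[OF q] t by auto
      have e: "Ft q (X t) = - X t q * CS N gamma eta sig q
                + X t q * Cconst N gamma A k sig c varpi eta *
                  (\<Sum>j\<in>{Side_a, Side_b}. jterm N qbar gamma (k * varpi / (sig * eta)) X t q j)"
        using Ft_eq[where v=X and t=t, OF q r] by (simp only: CSq_def Cc_def P_def)
      show ?thesis using d unfolding e .
    qed
  qed
  thus ?thesis using rng by blast
qed

end


context sys begin

lemma sol_bounds:
  assumes sol: "is_solution N qbar T A k sig c varpi eta gamma w"
  shows "\<forall>t\<in>{0..T}. \<forall>q\<in>Q. - M \<le> w t q \<and> w t q \<le> - m"
proof -
  have s: "\<forall>q\<in>Q. continuous_on {0..T} (\<lambda>t. w t q) \<and> w T q = -1 \<and>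
     (\<forall>t\<in>{0..<T}. well_defined N qbar gamma w t q \<and>
        ((\<lambda>s. w s q) has_real_derivative
           (- w t q * CSq q + w t q * Cc * (\<Sum>j\<in>{Side_a, Side_b}. jterm N qbar gamma P w t q j)))
        (at t within {0..T}))"
    using sol unfolding is_solution_def Q_def[symmetric] CSq_def[symmetric] Cc_def[symmetric] P_def[symmetric] .
  have ap: "\<forall>q\<in>Q. \<forall>t\<in>{0..T}. - exp (B * (T - t)) \<le> w t q \<and> w t q \<le> - exp (- (2 * Cc * (T - t)))"
  proof (rule apriori[OF finQ _ Cc B, where X=w and Mb="M+1" and CS=CSq
        and D="\<lambda>t q. - w t q * CSq q + w t q * Cc * (\<Sum>j\<in>{Side_a, Side_b}. jterm N qbar gamma P w t q j)"
        and Ja="\<lambda>t q. jterm N qbar gamma P w t q Side_a" and Jb="\<lambda>t q. jterm N qbar gamma P w t q Side_b"])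
    show "0 \<le> T" using T by simp
    show "\<forall>q\<in>Q. continuous_on {0..T} (\<lambda>t. w t q)" using s by auto
    show "\<forall>q\<in>Q. w T q = -1" using s by auto
    show "\<forall>q\<in>Q. \<forall>t\<in>{0..<T}. ((\<lambda>t. w t q) has_real_derivative
        (- w t q * CSq q + w t q * Cc * (\<Sum>j\<in>{Side_a, Side_b}. jterm N qbar gamma P w t q j))) (at t within {0..T})"
      using s by auto
    show "\<forall>q\<in>Q. \<forall>t\<in>{0..<T}. \<bar>w t q\<bar> \<le> M + 1 \<longrightarrow>
      - w t q * CSq q + w t q * Cc * (\<Sum>j\<in>{Side_a, Side_b}. jterm N qbar gamma P w t q j)
      = w t q * (- CSq q + Cc * (jterm N qbar gamma P w t q Side_a + jterm N qbar gamma P w t q Side_b))"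
      by (simp add: algebra_simps)
    show "\<forall>q\<in>Q. 0 \<le> CSq q \<and> CSq q \<le> B" using CS_nonneg CS_le_B by auto
    show "\<forall>q\<in>Q. \<forall>t\<in>{0..<T}. 0 \<le> jterm N qbar gamma P w t q Side_a \<and> 0 \<le> jterm N qbar gamma P w t q Side_b"
      using jterm_nonneg by auto
    show "\<forall>q\<in>Q. \<forall>t\<in>{0..<T}. w t q < 0 \<and> (\<forall>q'\<in>Q. w t q' \<le> w t q) \<longrightarrow>
        jterm N qbar gamma P w t q Side_a \<le> 1 \<and> jterm N qbar gamma P w t q Side_b \<le> 1"
      using jterm_le1 by auto
    show "exp (B * T) < M + 1" by (simp add: M_def)
  qed
  thus ?thesis using conv_bounds by blast
qed

lemma sol_inteq:
  assumes sol: "is_solution N qbar T A k sig c varpi eta gamma w"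
  shows "\<forall>q\<in>Q. continuous_on {0..T} (\<lambda>t. w t q)"
    "\<forall>q\<in>Q. \<forall>t\<in>{0..T}. w t q = -1 - integral {t..T} (\<lambda>s. Ft q (w s))"
proof -
  have s: "\<forall>q\<in>Q. continuous_on {0..T} (\<lambda>t. w t q) \<and> w T q = -1 \<and>
     (\<forall>t\<in>{0..<T}. well_defined N qbar gamma w t q \<and>
        ((\<lambda>s. w s q) has_real_derivative
           (- w t q * CSq q + w t q * Cc * (\<Sum>j\<in>{Side_a, Side_b}. jterm N qbar gamma P w t q j)))
        (at t within {0..T}))"
    using sol unfolding is_solution_def Q_def[symmetric] CSq_def[symmetric] Cc_def[symmetric] P_def[symmetric] .
  have rng: "\<forall>t\<in>{0..T}. \<forall>q\<in>Q. - M \<le> w t q \<and> w t q \<le> - m" by (rule sol_bounds[OF sol])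
  show cw: "\<forall>q\<in>Q. continuous_on {0..T} (\<lambda>t. w t q)" using s by auto
  show "\<forall>q\<in>Q. \<forall>t\<in>{0..T}. w t q = -1 - integral {t..T} (\<lambda>s. Ft q (w s))"
  proof (intro ballI)
    fix q t assume q: "q \<in> Q" and t: "t \<in> {0..T}"
    have "((\<lambda>s. Ft q (w s)) has_integral (w T q - w t q)) {t..T}"
    proof (rule fundamental_theorem_of_calculus_interior)
      show "t \<le> T" using t by simp
      show "continuous_on {t..T} (\<lambda>s. w s q)"
        by (rule continuous_on_subset[of "{0..T}"]) (use cw q t in auto)
      fix x assume x: "x \<in> {t<..<T}"
      hence x0: "x \<in> {0..<T}" using t by auto
      have r: "\<forall>q'\<in>Q. - M \<le> w x q' \<and> w x q' \<le> - m" using rng x0 by auto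
      have d: "((\<lambda>s. w s q) has_real_derivative
           (- w x q * CSq q + w x q * Cc * (\<Sum>j\<in>{Side_a, Side_b}. jterm N qbar gamma P w x q j)))
        (at x within {0..T})" using s q x0 by auto
      have "at x within {0..T} = at x" using x t by (intro at_within_interior) auto
      hence "((\<lambda>s. w s q) has_real_derivative Ft q (w x)) (at x)"
        using d Ft_eq[where v=w and t=x, OF q r] by simp
      thus "((\<lambda>s. w s q) has_vector_derivative Ft q (w x)) (at x)"
        by (simp add: has_real_derivative_iff_has_vector_derivative)
    qed
    hence "integral {t..T} (\<lambda>s. Ft q (w s)) = w T q - w t q" by (rule integral_unique)
    thus "w t q = -1 - integral {t..T} (\<lambda>s. Ft q (w s))" using s q by auto
  qed
qed

lemma main:
  "\<exists>v. is_solution N qbar T A k sig c varpi eta gamma v \<and> bounded_on N qbar T v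
           \<and> (\<forall>t\<in>{0..T}. \<forall>q\<in>Qset N qbar. v t q < 0)
           \<and> (\<forall>w. is_solution N qbar T A k sig c varpi eta gamma w \<and> bounded_on N qbar T w
                  \<longrightarrow> (\<forall>t\<in>{0..T}. \<forall>q\<in>Qset N qbar. w t q = v t q))"
proof -
  interpret O: ode Q Ft LF KF T by (rule ode_inst)
  obtain v where sol: "is_solution N qbar T A k sig c varpi eta gamma v"
    and rng: "\<forall>t\<in>{0..T}. \<forall>q\<in>Q. - M \<le> v t q \<and> v t q \<le> - m"
    using exist_sol by blast
  have bnd: "bounded_on N qbar T v"
    unfolding bounded_on_def Q_def[symmetric]
  proof (intro exI[of _ M] ballI)
    fix t q assume "t \<in> {0..T}" "q \<in> Q"
    hence "- M \<le> v t q" "v t q \<le> - m" using rng by auto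
    thus "\<bar>v t q\<bar> \<le> M" using m by (simp add: abs_le_iff)
  qed
  have neg: "\<forall>t\<in>{0..T}. \<forall>q\<in>Qset N qbar. v t q < 0"
    using rng m unfolding Q_def by force
  have uq: "\<forall>t\<in>{0..T}. \<forall>q\<in>Qset N qbar. w t q = v t q"
    if w: "is_solution N qbar T A k sig c varpi eta gamma w" for w
  proof -
    have "\<forall>q\<in>Q. \<forall>t\<in>{0..T}. w t q = v t q"
      by (rule O.uniq[OF sol_inteq(1)[OF w] sol_inteq(2)[OF w] sol_inteq(1)[OF sol] sol_inteq(2)[OF sol]])
    thus ?thesis unfolding Q_def by auto
  qed
  show ?thesis using sol bnd neg uq by blast
qed

end

theorem lemma4p2:
  fixes N qbar :: nat and T A k sig c varpi eta :: real and gamma :: "nat \<Rightarrow> real"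
  assumes "N \<ge> 1"
    and "T > 0" "A > 0" "k > 0" "sig > 0" "c > 0" "varpi > 0" "eta > 0"
    and "\<forall>i<N. gamma i > 0"
  shows "\<exists>v. is_solution N qbar T A k sig c varpi eta gamma v \<and> bounded_on N qbar T v
           \<and> (\<forall>t\<in>{0..T}. \<forall>q\<in>Qset N qbar. v t q < 0)
           \<and> (\<forall>w. is_solution N qbar T A k sig c varpi eta gamma w \<and> bounded_on N qbar T w
                  \<longrightarrow> (\<forall>t\<in>{0..T}. \<forall>q\<in>Qset N qbar. w t q = v t q))"
proof -
  interpret sys N qbar T A k sig c varpi eta gamma
    using assms by unfold_locales auto
  show ?thesis by (rule main)
qed

end
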